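(* Let $A\subseteq B$ be an extension of commutative rings such that $B$ has only finitely many maximal ideals. Then the canonical map $\mathfrak{C}(A,B)\to\operatorname{Pic}(A)$, sending the class of an invertible ideal $L$ to $[L]$, is an isomorphism of groups.
   Context: For an extension of rings $A\subseteq B$ and $A$-submodules $L,L'$ of $B$, $LL'$ is the $A$-submodule of finite sums $\sum x_ky_k$. An $A$-submodule $L$ of $B$ is an invertible ideal of $A\subseteq B$ if $LL'=A$ for some $A$-submodule $L'$ of $B$; these form an abelian group $\mathscr{G}(A,B)$ and $\mathfrak{C}(A,B)=\mathscr{G}(A,B)/\{Ax:x\in B^\ast\}$. $\operatorname{Pic}(A)$ is the group of isomorphism classes of finitely generated projective $A$-modules of constant rank $1$ under $\otimes_A$; invertible ideals are such modules. *)

theory Defs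
  imports "HOL-Algebra.Algebra"
begin

definition subring_ring :: "('b, 'c) ring_scheme \<Rightarrow> 'b set \<Rightarrow> ('b, 'c) ring_scheme" where
  "subring_ring B A = B\<lparr>carrier := A\<rparr>"

definition is_A_submodule :: "('b, 'c) ring_scheme \<Rightarrow> 'b set \<Rightarrow> 'b set \<Rightarrow> bool" where
  "is_A_submodule B A L \<longleftrightarrow> L \<subseteq> carrier B \<and> \<zero>\<^bsub>B\<^esub> \<in> L \<and>
     (\<forall>x\<in>L. \<forall>y\<in>L. x \<oplus>\<^bsub>B\<^esub> y \<in> L) \<and> (\<forall>x\<in>L. \<ominus>\<^bsub>B\<^esub> x \<in> L) \<and>
     (\<forall>a\<in>A. \<forall>x\<in>L. a \<otimes>\<^bsub>B\<^esub> x \<in> L)"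

inductive_set prod_submod :: "('b, 'c) ring_scheme \<Rightarrow> 'b set \<Rightarrow> 'b set \<Rightarrow> 'b set"
  for B L L' where
  zero: "\<zero>\<^bsub>B\<^esub> \<in> prod_submod B L L'"
| prod: "x \<in> L \<Longrightarrow> y \<in> L' \<Longrightarrow> x \<otimes>\<^bsub>B\<^esub> y \<in> prod_submod B L L'"
| add: "u \<in> prod_submod B L L' \<Longrightarrow> v \<in> prod_submod B L L' \<Longrightarrow> u \<oplus>\<^bsub>B\<^esub> v \<in> prod_submod B L L'"

definition invertible_ideal :: "('b, 'c) ring_scheme \<Rightarrow> 'b set \<Rightarrow> 'b set \<Rightarrow> bool" where
  "invertible_ideal B A L \<longleftrightarrow> is_A_submodule B A L \<and>
     (\<exists>L'. is_A_submodule B A L' \<and> prod_submod B L L' = A)"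

definition principal_submod :: "('b, 'c) ring_scheme \<Rightarrow> 'b set \<Rightarrow> 'b \<Rightarrow> 'b set" where
  "principal_submod B A x = {a \<otimes>\<^bsub>B\<^esub> x | a. a \<in> A}"

definition submod_as_module :: "('b, 'c) ring_scheme \<Rightarrow> 'b set \<Rightarrow> ('b, 'b) module" where
  "submod_as_module B L = \<lparr>carrier = L, monoid.mult = monoid.mult B, one = monoid.one B, ring.zero = ring.zero B,
      ring.add = ring.add B, smult = monoid.mult B\<rparr>"

definition lin_map :: "('a, 'r) ring_scheme \<Rightarrow> ('a, 'm, 's) module_scheme \<Rightarrow>
    ('a, 'n, 't) module_scheme \<Rightarrow> ('m \<Rightarrow> 'n) \<Rightarrow> bool" where
  "lin_map R M N f \<longleftrightarrow> f \<in> carrier M \<rightarrow> carrier N \<and>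
     (\<forall>x\<in>carrier M. \<forall>y\<in>carrier M. f (x \<oplus>\<^bsub>M\<^esub> y) = f x \<oplus>\<^bsub>N\<^esub> f y) \<and>
     (\<forall>a\<in>carrier R. \<forall>x\<in>carrier M. f (a \<odot>\<^bsub>M\<^esub> x) = a \<odot>\<^bsub>N\<^esub> f x)"

definition mod_iso :: "('a, 'r) ring_scheme \<Rightarrow> ('a, 'm, 's) module_scheme \<Rightarrow>
    ('a, 'n, 't) module_scheme \<Rightarrow> bool" where
  "mod_iso R M N \<longleftrightarrow> (\<exists>f. lin_map R M N f \<and> bij_betw f (carrier M) (carrier N))"

definition bilin_map :: "('a, 'r) ring_scheme \<Rightarrow> ('a, 'm, 's) module_scheme \<Rightarrow>
    ('a, 'n, 't) module_scheme \<Rightarrow> ('a, 'p, 'u) module_scheme \<Rightarrow> ('m \<Rightarrow> 'n \<Rightarrow> 'p) \<Rightarrow> bool" where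
  "bilin_map R M N P \<beta> \<longleftrightarrow>
     (\<forall>x\<in>carrier M. \<forall>y\<in>carrier N. \<beta> x y \<in> carrier P) \<and>
     (\<forall>x\<in>carrier M. lin_map R N P (\<beta> x)) \<and>
     (\<forall>y\<in>carrier N. lin_map R M P (\<lambda>x. \<beta> x y))"

definition free_module :: "('a, 'r) ring_scheme \<Rightarrow> nat \<Rightarrow> ('a, nat \<Rightarrow> 'a) module" where
  "free_module R n = \<lparr>carrier = {v. (\<forall>i<n. v i \<in> carrier R) \<and> (\<forall>i\<ge>n. v i = \<zero>\<^bsub>R\<^esub>)},
      monoid.mult = (\<lambda>v w i. v i \<otimes>\<^bsub>R\<^esub> w i), monoid.one = (\<lambda>i. if i < n then \<one>\<^bsub>R\<^esub> else \<zero>\<^bsub>R\<^esub>),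
      ring.zero = (\<lambda>i. \<zero>\<^bsub>R\<^esub>), ring.add = (\<lambda>v w i. v i \<oplus>\<^bsub>R\<^esub> w i),
      smult = (\<lambda>a v i. a \<otimes>\<^bsub>R\<^esub> v i)\<rparr>"

definition fg_projective :: "('a, 'r) ring_scheme \<Rightarrow> ('a, 'm, 's) module_scheme \<Rightarrow> bool" where
  "fg_projective R M \<longleftrightarrow> (\<exists>n f g. lin_map R M (free_module R n) f \<and>
      lin_map R (free_module R n) M g \<and> (\<forall>m\<in>carrier M. g (f m) = m))"

text \<open>Constant rank 1: for every prime ideal P of R the localization M_P is free of rank 1
  over R_P.  Unfolded: there is m0 in M such that m0/1 generates M_P
  (every m/1 equals (a/s) (m0/1)) and m0/1 is torsion-free over R_P.\<close>
definition const_rank_one :: "('a, 'r) ring_scheme \<Rightarrow> ('a, 'm, 's) module_scheme \<Rightarrow> bool" where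
  "const_rank_one R M \<longleftrightarrow> (\<forall>P. primeideal P R \<longrightarrow>
     (\<exists>m0\<in>carrier M.
        (\<forall>m\<in>carrier M. \<exists>a\<in>carrier R. \<exists>s\<in>carrier R - P. \<exists>t\<in>carrier R - P.
            t \<odot>\<^bsub>M\<^esub> ((s \<odot>\<^bsub>M\<^esub> m) \<oplus>\<^bsub>M\<^esub> (\<ominus>\<^bsub>M\<^esub> (a \<odot>\<^bsub>M\<^esub> m0))) = \<zero>\<^bsub>M\<^esub>) \<and>
        (\<forall>a\<in>carrier R. (\<exists>t\<in>carrier R - P. t \<odot>\<^bsub>M\<^esub> (a \<odot>\<^bsub>M\<^esub> m0) = \<zero>\<^bsub>M\<^esub>) \<longrightarrow>
            (\<exists>t\<in>carrier R - P. t \<otimes>\<^bsub>R\<^esub> a = \<zero>\<^bsub>R\<^esub>))))"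

end

theory Submission
  imports Defs
begin


lemma sr_simps[simp]:
  "carrier (subring_ring B A) = A"
  "monoid.mult (subring_ring B A) = monoid.mult B"
  "monoid.one (subring_ring B A) = monoid.one B"
  "ring.zero (subring_ring B A) = ring.zero B"
  "ring.add (subring_ring B A) = ring.add B"
  by (simp_all add: subring_ring_def)

lemma sm_simps[simp]:
  "carrier (submod_as_module B L) = L"
  "monoid.mult (submod_as_module B L) = monoid.mult B"
  "monoid.one (submod_as_module B L) = monoid.one B"
  "ring.zero (submod_as_module B L) = ring.zero B"
  "ring.add (submod_as_module B L) = ring.add B"
  "smult (submod_as_module B L) = monoid.mult B"
  by (simp_all add: submod_as_module_def)

lemma R_cring: assumes "cring B" "subring A B" shows "cring (subring_ring B A)"
proof -
  interpret cring B by fact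
  have "subcring A B" by (rule subcringI'[OF assms(2)])
  then show ?thesis unfolding subring_ring_def
    using subcring_iff[of A] subringE(1)[OF assms(2)] by simp
qed


lemma (in abelian_monoid) finsum_in_set:
  assumes "S \<subseteq> carrier G" "\<zero> \<in> S" "\<And>x y. x \<in> S \<Longrightarrow> y \<in> S \<Longrightarrow> x \<oplus> y \<in> S"
    and "finite I" "\<And>i. i \<in> I \<Longrightarrow> h i \<in> S"
  shows "finsum G h I \<in> S"
  using assms(4,5)
proof (induct I rule: finite_induct)
  case empty then show ?case using assms by simp
next
  case (insert x F)
  have "h \<in> F \<rightarrow> carrier G" "h x \<in> carrier G" using insert assms(1) by auto
  then show ?case using insert assms by (simp add: finsum_insert)
qed

lemma (in abelian_monoid) finsum_lessThan_Suc:
  assumes "\<And>i. i \<le> k \<Longrightarrow> f i \<in> carrier G"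
  shows "finsum G f {..<Suc k} = f k \<oplus> finsum G f {..<k}"
proof -
  have "{..<Suc k} = insert k {..<k}" by auto
  then show ?thesis using assms by (simp add: finsum_insert Pi_def)
qed

lemma (in abelian_monoid) finsum_swap:
  assumes "finite I" "finite J" "\<And>i j. i \<in> I \<Longrightarrow> j \<in> J \<Longrightarrow> h i j \<in> carrier G"
  shows "finsum G (\<lambda>i. finsum G (\<lambda>j. h i j) J) I = finsum G (\<lambda>j. finsum G (\<lambda>i. h i j) I) J"
  using assms(1,3)
proof (induct I rule: finite_induct)
  case empty then show ?case by (simp add: finsum_zero)
next
  case (insert x F)
  have c1: "(\<lambda>i. finsum G (h i) J) \<in> F \<rightarrow> carrier G" using insert by (auto intro: finsum_closed)
  have "finsum G (\<lambda>i. finsum G (\<lambda>j. h i j) J) (insert x F) =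
        finsum G (\<lambda>j. h x j) J \<oplus> finsum G (\<lambda>i. finsum G (\<lambda>j. h i j) J) F"
    using insert c1 by (subst finsum_insert) (auto intro: finsum_closed)
  also have "\<dots> = finsum G (\<lambda>j. h x j) J \<oplus> finsum G (\<lambda>j. finsum G (\<lambda>i. h i j) F) J"
    using insert by simp
  also have "\<dots> = finsum G (\<lambda>j. h x j \<oplus> finsum G (\<lambda>i. h i j) F) J"
    using insert by (subst finsum_addf) (auto simp: Pi_def intro: finsum_closed)
  also have "\<dots> = finsum G (\<lambda>j. finsum G (\<lambda>i. h i j) (insert x F)) J"
    using insert by (intro finsum_cong) (auto simp: Pi_def finsum_insert intro: finsum_closed)
  finally show ?case .
qed

lemma (in cring) krull:
  assumes "ideal I R" "\<one> \<notin> I"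
  shows "\<exists>M. maximalideal M R \<and> I \<subseteq> M"
proof -
  define AA where "AA = {J. ideal J R \<and> I \<subseteq> J \<and> \<one> \<notin> J}"
  have "\<exists>Mx\<in>AA. \<forall>Xx\<in>AA. Mx \<subseteq> Xx \<longrightarrow> Xx = Mx"
  proof (rule subset_Zorn_nonempty)
    show "AA \<noteq> {}" using assms unfolding AA_def by auto
    fix C assume C: "C \<noteq> {}" "subset.chain AA C"
    have "subset.chain {I. ideal I R} C" using C(2) unfolding AA_def pred_on.chain_def by auto
    then have "ideal (\<Union>C) R" using chain_Union_is_ideal[of C] C(1) by simp
    moreover have "I \<subseteq> \<Union>C" using C unfolding AA_def pred_on.chain_def by blast
    moreover have "\<one> \<notin> \<Union>C" using C unfolding AA_def pred_on.chain_def by blast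
    ultimately show "\<Union>C \<in> AA" unfolding AA_def by auto
  qed
  then obtain M where M: "M \<in> AA" "\<And>Xx. Xx \<in> AA \<Longrightarrow> M \<subseteq> Xx \<Longrightarrow> Xx = M" by blast
  have "maximalideal M R"
  proof (rule maximalidealI)
    show "ideal M R" using M unfolding AA_def by auto
    show "carrier R \<noteq> M" using M unfolding AA_def by auto
    fix J assume J: "ideal J R" "M \<subseteq> J" "J \<subseteq> carrier R"
    show "J = M \<or> J = carrier R"
    proof (cases "\<one> \<in> J")
      case True then show ?thesis using ideal.one_imp_carrier[OF J(1)] by auto
    next
      case False then have "J \<in> AA" using J M unfolding AA_def by auto
      then show ?thesis using M J by auto
    qed
  qed
  then show ?thesis using M unfolding AA_def by auto
qed

lemma (in cring) not_in_max_unit: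
  assumes "x \<in> carrier R" "\<And>M. maximalideal M R \<Longrightarrow> x \<notin> M"
  shows "x \<in> Units R"
proof (rule ccontr)
  assume nu: "x \<notin> Units R"
  have "\<one> \<notin> PIdl x"
  proof
    assume "\<one> \<in> PIdl x"
    then obtain y where "y \<in> carrier R" "\<one> = y \<otimes> x" unfolding cgenideal_def by auto
    then have "x \<in> Units R" using assms(1) unfolding Units_def by (auto simp: m_comm intro!: bexI[of _ y])
    then show False using nu by simp
  qed
  then obtain M where "maximalideal M R" "PIdl x \<subseteq> M" using krull cgenideal_ideal assms(1) by blast
  moreover have "x \<in> PIdl x" using cgenideal_self assms(1) by blast
  ultimately show False using assms(2) by blast
qed

lemma (in cring) zero_local:
  assumes "d \<in> carrier R" "\<And>P. primeideal P R \<Longrightarrow> \<exists>u\<in>carrier R - P. u \<otimes> d = \<zero>"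
  shows "d = \<zero>"
proof (rule ccontr)
  assume dn: "d \<noteq> \<zero>"
  define I where "I = {u \<in> carrier R. u \<otimes> d = \<zero>}"
  have "ideal I R" unfolding I_def
  proof (intro idealI ring_axioms subgroup.intro, simp_all)
    show "\<And>x y. x \<in> carrier R \<and> x \<otimes> d = \<zero> \<Longrightarrow> y \<in> carrier R \<and> y \<otimes> d = \<zero> \<Longrightarrow> (x \<oplus> y) \<otimes> d = \<zero>"
      using assms(1) by (simp add: l_distr)
    show "\<And>x. x \<in> carrier R \<and> x \<otimes> d = \<zero> \<Longrightarrow> inv\<^bsub>add_monoid R\<^esub> x \<otimes> d = \<zero>"
      using assms(1) by (metis a_inv_def l_minus minus_zero)
    show "\<And>a x. a \<in> carrier R \<and> a \<otimes> d = \<zero> \<Longrightarrow> x \<in> carrier R \<Longrightarrow> x \<otimes> a \<otimes> d = \<zero>"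
      using assms(1) by (simp add: m_assoc)
    show "\<And>a x. a \<in> carrier R \<and> a \<otimes> d = \<zero> \<Longrightarrow> x \<in> carrier R \<Longrightarrow> a \<otimes> x \<otimes> d = \<zero>"
      using assms(1) by (metis m_assoc m_comm r_null)
  qed (use assms(1) in auto)
  moreover have "\<one> \<notin> I" using dn assms(1) unfolding I_def by auto
  ultimately obtain M where M: "maximalideal M R" "I \<subseteq> M" using krull by blast
  then have "primeideal M R" using maximalideal_prime by blast
  then obtain u where "u \<in> carrier R - M" "u \<otimes> d = \<zero>" using assms(2) by blast
  then show False using M unfolding I_def by auto
qed


locale ext_set = cring B for B :: "'b ring" (structure) +
  fixes A :: "'b set"
  assumes subA: "subring A B"
begin

lemma A_sub: "A \<subseteq> carrier B" using subringE(1)[OF subA] .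
lemma A_carr[simp]: "a \<in> A \<Longrightarrow> a \<in> carrier B" using A_sub by blast
lemma A_zero[simp]: "\<zero> \<in> A" using subringE(2)[OF subA] .
lemma A_one[simp]: "\<one> \<in> A" using subringE(3)[OF subA] .
lemma A_neg[simp]: "a \<in> A \<Longrightarrow> \<ominus> a \<in> A" using subringE(5)[OF subA] .
lemma A_mult[simp]: "a \<in> A \<Longrightarrow> b \<in> A \<Longrightarrow> a \<otimes> b \<in> A" using subringE(6)[OF subA] .
lemma A_add[simp]: "a \<in> A \<Longrightarrow> b \<in> A \<Longrightarrow> a \<oplus> b \<in> A" using subringE(7)[OF subA] .

lemma Rcr: "cring (subring_ring B A)" using R_cring[OF is_cring subA] .

lemma R_neg: assumes a: "a \<in> A" shows "\<ominus>\<^bsub>subring_ring B A\<^esub> a = \<ominus> a"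
proof -
  interpret Rr: cring "subring_ring B A" by (rule Rcr)
  have c: "\<ominus>\<^bsub>subring_ring B A\<^esub> a \<in> A" using Rr.a_inv_closed a by simp
  have "\<ominus>\<^bsub>subring_ring B A\<^esub> a \<oplus> a = \<zero>" using Rr.l_neg[of a] a by simp
  then show ?thesis using minus_equality[of "\<ominus>\<^bsub>subring_ring B A\<^esub> a" a] c a by simp
qed

lemma subm_props:
  assumes "is_A_submodule B A L"
  shows "L \<subseteq> carrier B" "\<zero> \<in> L" "\<And>x y. x \<in> L \<Longrightarrow> y \<in> L \<Longrightarrow> x \<oplus> y \<in> L"
    "\<And>x. x \<in> L \<Longrightarrow> \<ominus> x \<in> L" "\<And>a x. a \<in> A \<Longrightarrow> x \<in> L \<Longrightarrow> a \<otimes> x \<in> L"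
  using assms unfolding is_A_submodule_def by auto

lemma subm_carr: "is_A_submodule B A L \<Longrightarrow> x \<in> L \<Longrightarrow> x \<in> carrier B"
  using subm_props(1) by blast

lemma SM_ag: assumes "is_A_submodule B A L" shows "abelian_group (submod_as_module B L)"
proof (rule abelian_groupI, simp_all)
  note p = subm_props[OF assms]
  show "\<And>x y. x \<in> L \<Longrightarrow> y \<in> L \<Longrightarrow> x \<oplus> y \<in> L" using p by blast
  show "\<zero> \<in> L" using p by blast
  show "\<And>x y z. x \<in> L \<Longrightarrow> y \<in> L \<Longrightarrow> z \<in> L \<Longrightarrow> x \<oplus> y \<oplus> z = x \<oplus> (y \<oplus> z)"
    using p(1) by (auto intro: a_assoc)
  show "\<And>x y. x \<in> L \<Longrightarrow> y \<in> L \<Longrightarrow> x \<oplus> y = y \<oplus> x" using p(1) by (auto intro: a_comm)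
  show "\<And>x. x \<in> L \<Longrightarrow> \<zero> \<oplus> x = x" using p(1) by auto
  show "\<And>x. x \<in> L \<Longrightarrow> \<exists>y\<in>L. y \<oplus> x = \<zero>"
  proof -
    fix x assume x: "x \<in> L"
    then have "x \<in> carrier B" using p(1) by blast
    then show "\<exists>y\<in>L. y \<oplus> x = \<zero>" using p(4)[OF x] by (intro bexI[of _ "\<ominus> x"]) (auto simp: l_neg)
  qed
qed

lemma SM_neg: assumes "is_A_submodule B A L" "x \<in> L"
  shows "\<ominus>\<^bsub>submod_as_module B L\<^esub> x = \<ominus> x"
proof -
  interpret S: abelian_group "submod_as_module B L" by (rule SM_ag[OF assms(1)])
  note p = subm_props[OF assms(1)]
  have "\<ominus> x \<oplus>\<^bsub>submod_as_module B L\<^esub> x = \<zero>\<^bsub>submod_as_module B L\<^esub>"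
    using p assms(2) by (simp add: l_neg subsetD)
  then show ?thesis using S.minus_equality assms p by simp
qed

lemma prod_carr: assumes "L \<subseteq> carrier B" "L' \<subseteq> carrier B" "z \<in> prod_submod B L L'" shows "z \<in> carrier B"
  using assms(3) by (induct rule: prod_submod.induct) (use assms in auto)

lemma prod_sub: "L \<subseteq> carrier B \<Longrightarrow> L' \<subseteq> carrier B \<Longrightarrow> prod_submod B L L' \<subseteq> carrier B"
  using prod_carr by blast

lemma finsum_join:
  fixes n1 n2 :: nat
  assumes "\<And>i. i < n1 \<Longrightarrow> f1 i \<in> carrier B" "\<And>i. i < n2 \<Longrightarrow> f2 i \<in> carrier B"
  shows "finsum B f1 {..<n1} \<oplus> finsum B f2 {..<n2} =
         finsum B (\<lambda>i. if i < n1 then f1 i else f2 (i - n1)) {..<n1+n2}"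
proof -
  let ?h = "\<lambda>i. if i < n1 then f1 i else f2 (i - n1)"
  have hc: "?h \<in> {..<n1+n2} \<rightarrow> carrier B"
  proof
    fix i assume i: "i \<in> {..<n1+n2}"
    show "?h i \<in> carrier B"
    proof (cases "i < n1")
      case True then show ?thesis using assms(1) by simp
    next
      case False then have "i - n1 < n2" using i by auto
      then show ?thesis using assms(2) False by simp
    qed
  qed
  have u1: "i \<in> {..<n1} \<union> (\<lambda>i. i + n1) ` {..<n2}" if i: "i \<in> {..<n1+n2}" for i
  proof (cases "i < n1")
    case False
    then have "i = (i - n1) + n1" "i - n1 \<in> {..<n2}" using i by auto
    then show ?thesis by blast
  qed simp
  have u: "{..<n1+n2} = {..<n1} \<union> (\<lambda>i. i + n1) ` {..<n2}"
    using u1 by auto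
  have "finsum B ?h {..<n1+n2} = finsum B ?h {..<n1} \<oplus> finsum B ?h ((\<lambda>i. i + n1) ` {..<n2})"
    unfolding u using hc u by (intro finsum_Un_disjoint) auto
  also have "finsum B ?h {..<n1} = finsum B f1 {..<n1}"
    using assms by (intro finsum_cong) auto
  also have "finsum B ?h ((\<lambda>i. i + n1) ` {..<n2}) = finsum B (\<lambda>i. ?h (i + n1)) {..<n2}"
    using hc u by (intro finsum_reindex) auto
  also have "\<dots> = finsum B f2 {..<n2}"
    using assms by (intro finsum_cong) (auto simp: Pi_def)
  finally show ?thesis by simp
qed

lemma prod_rep:
  assumes "L \<subseteq> carrier B" "L' \<subseteq> carrier B" "z \<in> prod_submod B L L'"
  shows "\<exists>n::nat. \<exists>xf yf. (\<forall>i<n. xf i \<in> L \<and> yf i \<in> L') \<and> z = finsum B (\<lambda>i. xf i \<otimes> yf i) {..<n}"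
  using assms(3)
proof (induct z rule: prod_submod.induct)
  case zero
  have "\<zero> = finsum B (\<lambda>i. (\<lambda>i. \<zero>) i \<otimes> (\<lambda>i. \<zero>) i) {..<(0::nat)}" by simp
  then show ?case by (intro exI[of _ "0::nat"] exI[of _ "\<lambda>i. \<zero>"]) simp
next
  case (prod x y)
  show ?case
    by (rule exI[of _ "1::nat"], rule exI[of _ "\<lambda>i. x"], rule exI[of _ "\<lambda>i. y"])
       (use prod assms in \<open>auto simp: finsum_insert lessThan_Suc subsetD\<close>)
next
  case (add u v)
  obtain n1 :: nat and x1 y1 where
    h1: "\<forall>i<n1. x1 i \<in> L \<and> y1 i \<in> L'" "u = finsum B (\<lambda>i. x1 i \<otimes> y1 i) {..<n1}"
    using add(2) by blast
  obtain n2 :: nat and x2 y2 where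
    h2: "\<forall>i<n2. x2 i \<in> L \<and> y2 i \<in> L'" "v = finsum B (\<lambda>i. x2 i \<otimes> y2 i) {..<n2}"
    using add(4) by blast
  have c: "\<And>a b. a \<in> L \<Longrightarrow> b \<in> L' \<Longrightarrow> a \<otimes> b \<in> carrier B" using assms by blast
  have "u \<oplus> v = finsum B (\<lambda>i. if i < n1 then x1 i \<otimes> y1 i else x2 (i - n1) \<otimes> y2 (i - n1)) {..<n1+n2}"
    unfolding h1(2) h2(2) using h1 h2 c by (intro finsum_join) auto
  also have "\<dots> = finsum B (\<lambda>i. (if i < n1 then x1 i else x2 (i - n1)) \<otimes> (if i < n1 then y1 i else y2 (i - n1))) {..<n1+n2}"
    by (rule arg_cong[where f="\<lambda>h. finsum B h {..<n1+n2}"]) (rule ext, simp)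
  finally show ?case
    by (intro exI[of _ "n1+n2"] exI[of _ "\<lambda>i. if i < n1 then x1 i else x2 (i - n1)"]
        exI[of _ "\<lambda>i. if i < n1 then y1 i else y2 (i - n1)"]) (use h1 h2 in auto)
qed

end




lemma lin_mapI:
  assumes "f \<in> carrier M \<rightarrow> carrier N"
    "\<And>x y. x \<in> carrier M \<Longrightarrow> y \<in> carrier M \<Longrightarrow> f (x \<oplus>\<^bsub>M\<^esub> y) = f x \<oplus>\<^bsub>N\<^esub> f y"
    "\<And>a x. a \<in> carrier R \<Longrightarrow> x \<in> carrier M \<Longrightarrow> f (a \<odot>\<^bsub>M\<^esub> x) = a \<odot>\<^bsub>N\<^esub> f x"
  shows "lin_map R M N f"
  using assms unfolding lin_map_def by blast

lemma lin_mapD: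
  assumes "lin_map R M N f"
  shows "\<And>x. x \<in> carrier M \<Longrightarrow> f x \<in> carrier N"
    "\<And>x y. x \<in> carrier M \<Longrightarrow> y \<in> carrier M \<Longrightarrow> f (x \<oplus>\<^bsub>M\<^esub> y) = f x \<oplus>\<^bsub>N\<^esub> f y"
    "\<And>a x. a \<in> carrier R \<Longrightarrow> x \<in> carrier M \<Longrightarrow> f (a \<odot>\<^bsub>M\<^esub> x) = a \<odot>\<^bsub>N\<^esub> f x"
  using assms unfolding lin_map_def by blast+

lemma free_simps[simp]:
  "carrier (free_module R n) = {v. (\<forall>i<n. v i \<in> carrier R) \<and> (\<forall>i\<ge>n. v i = \<zero>\<^bsub>R\<^esub>)}"
  "smult (free_module R n) = (\<lambda>a v i. a \<otimes>\<^bsub>R\<^esub> v i)"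
  "ring.add (free_module R n) = (\<lambda>v w i. v i \<oplus>\<^bsub>R\<^esub> w i)"
  "ring.zero (free_module R n) = (\<lambda>i. \<zero>\<^bsub>R\<^esub>)"
  by (simp_all add: free_module_def)

context ext_set begin

lemma subm_finsum:
  assumes "is_A_submodule B A L" "finite I" "\<And>i. i \<in> I \<Longrightarrow> h i \<in> L"
  shows "finsum B h I \<in> L"
proof (rule finsum_in_set)
  show "L \<subseteq> carrier B" using subm_props(1)[OF assms(1)] .
  show "\<zero> \<in> L" using subm_props(2)[OF assms(1)] .
  show "\<And>x y. x\<in>L \<Longrightarrow> y\<in>L \<Longrightarrow> x \<oplus> y \<in> L" using subm_props(3)[OF assms(1)] .
qed (use assms in auto)

lemma inv_data:
  assumes "invertible_ideal B A L"
  obtains L' n xf yf where "is_A_submodule B A L" "is_A_submodule B A L'" "prod_submod B L L' = A"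
    "\<forall>i<(n::nat). xf i \<in> L \<and> yf i \<in> L'" "finsum B (\<lambda>i. xf i \<otimes> yf i) {..<n} = \<one>"
proof -
  from assms obtain L' where h: "is_A_submodule B A L" "is_A_submodule B A L'" "prod_submod B L L' = A"
    unfolding invertible_ideal_def by blast
  have "\<one> \<in> prod_submod B L L'" using h(3) by simp
  then obtain n xf yf where f: "\<forall>i<(n::nat). xf i \<in> L \<and> yf i \<in> L'" "\<one> = finsum B (\<lambda>i. xf i \<otimes> yf i) {..<n}"
    using prod_rep[OF subm_props(1)[OF h(1)] subm_props(1)[OF h(2)]] by blast
  show ?thesis by (rule that[OF h f(1) f(2)[symmetric]])
qed


end

locale surj_set = ext_set B A for B :: "'b ring" (structure) and A +
  fixes M :: "('b, 'm) module" and n :: nat and f g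
  assumes Mmod: "module (subring_ring B A) M"
    and lf: "lin_map (subring_ring B A) M (free_module (subring_ring B A) n) f"
    and lg: "lin_map (subring_ring B A) (free_module (subring_ring B A) n) M g"
    and gf: "\<forall>m\<in>carrier M. g (f m) = m"
    and rk: "const_rank_one (subring_ring B A) M"
begin

lemma fA: "m \<in> carrier M \<Longrightarrow> i < n \<Longrightarrow> f m i \<in> A"
  using lin_mapD(1)[OF lf, of m] by simp
lemma fz: "m \<in> carrier M \<Longrightarrow> n \<le> i \<Longrightarrow> f m i = \<zero>"
  using lin_mapD(1)[OF lf, of m] by simp
lemma fc[simp]: "m \<in> carrier M \<Longrightarrow> f m i \<in> carrier B"
  using fA fz by (cases "i < n") auto
lemma fadd: "m \<in> carrier M \<Longrightarrow> m' \<in> carrier M \<Longrightarrow> f (m \<oplus>\<^bsub>M\<^esub> m') i = f m i \<oplus> f m' i"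
  using lin_mapD(2)[OF lf, of m m'] by simp
lemma fsm: "a \<in> A \<Longrightarrow> m \<in> carrier M \<Longrightarrow> f (a \<odot>\<^bsub>M\<^esub> m) i = a \<otimes> f m i"
  using lin_mapD(3)[OF lf, of a m] by simp
lemma gM: "\<forall>i<n. v i \<in> A \<Longrightarrow> \<forall>i\<ge>n. v i = \<zero> \<Longrightarrow> g v \<in> carrier M"
  using lin_mapD(1)[OF lg, of v] by simp
lemma gadd: "\<forall>i<n. v i \<in> A \<Longrightarrow> \<forall>i\<ge>n. v i = \<zero> \<Longrightarrow> \<forall>i<n. w i \<in> A \<Longrightarrow> \<forall>i\<ge>n. w i = \<zero> \<Longrightarrow>
    g (\<lambda>i. v i \<oplus> w i) = g v \<oplus>\<^bsub>M\<^esub> g w"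
  using lin_mapD(2)[OF lg, of v w] by simp
lemma gsm: "a \<in> A \<Longrightarrow> \<forall>i<n. v i \<in> A \<Longrightarrow> \<forall>i\<ge>n. v i = \<zero> \<Longrightarrow>
    g (\<lambda>i. a \<otimes> v i) = a \<odot>\<^bsub>M\<^esub> g v"
  using lin_mapD(3)[OF lg, of a v] by simp

lemma f0: "f \<zero>\<^bsub>M\<^esub> i = \<zero>"
proof -
  interpret Mm: module "subring_ring B A" M by (rule Mmod)
  have "f (\<zero> \<odot>\<^bsub>M\<^esub> \<zero>\<^bsub>M\<^esub>) i = \<zero> \<otimes> f \<zero>\<^bsub>M\<^esub> i" using fsm[of "\<zero>" "\<zero>\<^bsub>M\<^esub>" i] by simp
  moreover have "\<zero> \<odot>\<^bsub>M\<^esub> \<zero>\<^bsub>M\<^esub> = \<zero>\<^bsub>M\<^esub>" using Mm.smult_l_null[of "\<zero>\<^bsub>M\<^esub>"] by simp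
  ultimately show ?thesis by simp
qed

lemma g0: "g (\<lambda>i. \<zero>) = \<zero>\<^bsub>M\<^esub>"
proof -
  interpret Mm: module "subring_ring B A" M by (rule Mmod)
  have "g (\<lambda>i. \<zero> \<otimes> \<zero>) = \<zero> \<odot>\<^bsub>M\<^esub> g (\<lambda>i. \<zero>)" using gsm[of "\<zero>" "\<lambda>i. \<zero>"] by simp
  moreover have "g (\<lambda>i. \<zero>) \<in> carrier M" using gM[of "\<lambda>i. \<zero>"] by simp
  ultimately show ?thesis using Mm.smult_l_null[of "g (\<lambda>i. \<zero>)"] by simp
qed

definition ev :: "nat \<Rightarrow> nat \<Rightarrow> 'b" where "ev k = (\<lambda>i. if i = k then \<one> else \<zero>)"
definition tr :: "nat \<Rightarrow> (nat \<Rightarrow> 'b) \<Rightarrow> nat \<Rightarrow> 'b" where "tr k v = (\<lambda>i. if i < k then v i else \<zero>)"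

lemma ev_A: "k < n \<Longrightarrow> \<forall>i<n. ev k i \<in> A" "k < n \<Longrightarrow> \<forall>i\<ge>n. ev k i = \<zero>"
  unfolding ev_def by auto

lemma gev: "k < n \<Longrightarrow> g (ev k) \<in> carrier M"
  using gM ev_A by blast

lemma tr_A: "\<forall>i<n. v i \<in> A \<Longrightarrow> \<forall>i<n. tr k v i \<in> A" "\<forall>i\<ge>n. v i = \<zero> \<Longrightarrow> \<forall>i\<ge>n. tr k v i = \<zero>"
  unfolding tr_def by auto

lemma tr_Suc:
  assumes "k < n" "\<forall>i<n. v i \<in> A" "\<forall>i\<ge>n. v i = \<zero>"
  shows "g (tr (Suc k) v) = g (tr k v) \<oplus>\<^bsub>M\<^esub> (v k \<odot>\<^bsub>M\<^esub> g (ev k))"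
proof -
  have vk: "v k \<in> A" using assms by simp
  have vc: "\<And>i. v i \<in> carrier B" using assms by (metis A_carr not_le zero_closed)
  have "tr (Suc k) v = (\<lambda>i. tr k v i \<oplus> (v k \<otimes> ev k i))"
    by (rule ext) (auto simp: tr_def ev_def vc less_Suc_eq)
  then have "g (tr (Suc k) v) = g (\<lambda>i. tr k v i \<oplus> (\<lambda>i. v k \<otimes> ev k i) i)" by simp
  also have "\<dots> = g (tr k v) \<oplus>\<^bsub>M\<^esub> g (\<lambda>i. v k \<otimes> ev k i)"
    by (rule gadd) (use assms vk ev_A tr_A in auto)
  also have "g (\<lambda>i. v k \<otimes> ev k i) = v k \<odot>\<^bsub>M\<^esub> g (ev k)"
    by (rule gsm) (use assms vk ev_A in auto)
  finally show ?thesis .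
qed

lemma tr_n: "\<forall>i\<ge>n. v i = \<zero> \<Longrightarrow> tr n v = v"
  unfolding tr_def by (rule ext) auto

lemma tr_0: "tr 0 v = (\<lambda>i. \<zero>)"
  unfolding tr_def by simp

lemma lemG:
  assumes m': "m' \<in> carrier M"
  shows "finsum B (\<lambda>k. f m' k \<otimes> f (g (ev k)) i) {..<n} = f m' i"
proof -
  interpret Mm: module "subring_ring B A" M by (rule Mmod)
  let ?v = "f m'"
  have v: "\<forall>i<n. ?v i \<in> A" "\<forall>i\<ge>n. ?v i = \<zero>" using fA fz m' by auto
  have "k \<le> n \<Longrightarrow> finsum B (\<lambda>k. ?v k \<otimes> f (g (ev k)) i) {..<k} = f (g (tr k ?v)) i" for k
  proof (induct k)
    case 0 then show ?case using tr_0 g0 f0 by simp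
  next
    case (Suc k)
    then have k: "k < n" by simp
    have trM: "g (tr k ?v) \<in> carrier M" using gM tr_A v by blast
    have vk: "?v k \<in> A" using v k by simp
    have "finsum B (\<lambda>k. ?v k \<otimes> f (g (ev k)) i) {..<Suc k} =
          ?v k \<otimes> f (g (ev k)) i \<oplus> finsum B (\<lambda>k. ?v k \<otimes> f (g (ev k)) i) {..<k}"
      using m' gev Suc by (intro finsum_lessThan_Suc) auto
    also have "finsum B (\<lambda>k. ?v k \<otimes> f (g (ev k)) i) {..<k} = f (g (tr k ?v)) i"
      using Suc by simp
    also have "f (g (tr (Suc k) ?v)) i = f (g (tr k ?v)) i \<oplus> ?v k \<otimes> f (g (ev k)) i"
      using tr_Suc[OF k v] fadd[OF trM Mm.smult_closed[of "?v k" "g (ev k)"]] fsm[OF vk gev[OF k]] vk gev[OF k]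
      by simp
    ultimately show ?case using trM gev[OF k] m' by (simp add: a_comm)
  qed
  from this[of n] show ?thesis using tr_n v gf m' by simp
qed

lemma rank_data:
  assumes P: "primeideal P (subring_ring B A)"
  shows "\<exists>m0\<in>carrier M. (\<forall>m\<in>carrier M. \<exists>a\<in>A. \<exists>s\<in>A - P. s \<odot>\<^bsub>M\<^esub> m = a \<odot>\<^bsub>M\<^esub> m0) \<and>
     (\<forall>a\<in>A. (\<exists>t\<in>A - P. t \<odot>\<^bsub>M\<^esub> (a \<odot>\<^bsub>M\<^esub> m0) = \<zero>\<^bsub>M\<^esub>) \<longrightarrow> (\<exists>t\<in>A - P. t \<otimes> a = \<zero>))"
proof -
  interpret Mm: module "subring_ring B A" M by (rule Mmod)
  interpret Pp: primeideal P "subring_ring B A" by fact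
  have Pprime: "a \<in> P \<or> b \<in> P" if "a \<in> A" "b \<in> A" "a \<otimes> b \<in> P" for a b
    using Pp.I_prime[of a b] that by simp
  obtain m0 where m0: "m0 \<in> carrier M"
    and loc: "\<forall>m\<in>carrier M. \<exists>a\<in>A. \<exists>s\<in>A - P. \<exists>t\<in>A - P.
            t \<odot>\<^bsub>M\<^esub> ((s \<odot>\<^bsub>M\<^esub> m) \<oplus>\<^bsub>M\<^esub> (\<ominus>\<^bsub>M\<^esub> (a \<odot>\<^bsub>M\<^esub> m0))) = \<zero>\<^bsub>M\<^esub>"
    and tf: "\<forall>a\<in>A. (\<exists>t\<in>A - P. t \<odot>\<^bsub>M\<^esub> (a \<odot>\<^bsub>M\<^esub> m0) = \<zero>\<^bsub>M\<^esub>) \<longrightarrow> (\<exists>t\<in>A - P. t \<otimes> a = \<zero>)"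
    using rk P unfolding const_rank_one_def by auto
  show ?thesis
  proof (intro bexI[of _ m0] conjI ballI)
    fix m assume m: "m \<in> carrier M"
    then obtain a s t where ast: "a \<in> A" "s \<in> A" "s \<notin> P" "t \<in> A" "t \<notin> P"
      "t \<odot>\<^bsub>M\<^esub> ((s \<odot>\<^bsub>M\<^esub> m) \<oplus>\<^bsub>M\<^esub> (\<ominus>\<^bsub>M\<^esub> (a \<odot>\<^bsub>M\<^esub> m0))) = \<zero>\<^bsub>M\<^esub>" using loc by blast
    have c1: "s \<odot>\<^bsub>M\<^esub> m \<in> carrier M" "a \<odot>\<^bsub>M\<^esub> m0 \<in> carrier M" using ast m m0 by simp_all
    have "(t \<otimes> s) \<odot>\<^bsub>M\<^esub> m \<oplus>\<^bsub>M\<^esub> \<ominus>\<^bsub>M\<^esub> ((t \<otimes> a) \<odot>\<^bsub>M\<^esub> m0) = \<zero>\<^bsub>M\<^esub>"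
      using ast(6) Mm.smult_r_distr[of t] Mm.smult_r_minus[of t] Mm.smult_assoc1[of t s m]
        Mm.smult_assoc1[of t a m0] c1 ast m m0 by simp
    then have e: "(t \<otimes> s) \<odot>\<^bsub>M\<^esub> m = (t \<otimes> a) \<odot>\<^bsub>M\<^esub> m0"
      using Mm.M.minus_equality[of "(t \<otimes> s) \<odot>\<^bsub>M\<^esub> m" "\<ominus>\<^bsub>M\<^esub> ((t \<otimes> a) \<odot>\<^bsub>M\<^esub> m0)"] ast m m0
      by (simp add: Mm.M.a_comm)
    have "t \<otimes> s \<notin> P" using Pprime[of t s] ast by blast
    then show "\<exists>a\<in>A. \<exists>s\<in>A - P. s \<odot>\<^bsub>M\<^esub> m = a \<odot>\<^bsub>M\<^esub> m0"
      using e ast by (intro bexI[of _ "t \<otimes> a"] bexI[of _ "t \<otimes> s"]) auto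
  qed (use m0 tf in auto)
qed

lemma minors:
  assumes m: "m \<in> carrier M" and m': "m' \<in> carrier M"
  shows "f m i \<otimes> f m' j = f m' i \<otimes> f m j"
proof -
  interpret Mm: module "subring_ring B A" M by (rule Mmod)
  interpret Rr: cring "subring_ring B A" by (rule Rcr)
  define D where "D = f m i \<otimes> f m' j \<ominus> f m' i \<otimes> f m j"
  have DA: "D \<in> A"
  proof -
    have "f m i \<otimes> f m' j \<in> A" "f m' i \<otimes> f m j \<in> A"
      using fA fz m m' by (cases "i < n"; cases "j < n"; simp)+
    then show ?thesis unfolding D_def a_minus_def by simp
  qed
  have "D = \<zero>\<^bsub>subring_ring B A\<^esub>"
  proof (rule cring.zero_local[OF Rcr])
    show "D \<in> carrier (subring_ring B A)" using DA by simp
    fix P assume P: "primeideal P (subring_ring B A)"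
    interpret Pp: primeideal P "subring_ring B A" by fact
    have Pprime: "a \<in> P \<or> b \<in> P" if "a \<in> A" "b \<in> A" "a \<otimes> b \<in> P" for a b
      using Pp.I_prime[of a b] that by simp
    obtain m0 where m0: "m0 \<in> carrier M" and loc: "\<forall>m\<in>carrier M. \<exists>a\<in>A. \<exists>s\<in>A - P. s \<odot>\<^bsub>M\<^esub> m = a \<odot>\<^bsub>M\<^esub> m0"
      using rank_data[OF P] by blast
    obtain a s where as: "a \<in> A" "s \<in> A" "s \<notin> P" "s \<odot>\<^bsub>M\<^esub> m = a \<odot>\<^bsub>M\<^esub> m0" using loc m by blast
    obtain a' s' where as': "a' \<in> A" "s' \<in> A" "s' \<notin> P" "s' \<odot>\<^bsub>M\<^esub> m' = a' \<odot>\<^bsub>M\<^esub> m0" using loc m' by blast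
    have r: "s \<otimes> f m k = a \<otimes> f m0 k" for k using fsm[of s m k] fsm[of a m0 k] as m m0 by simp
    have r': "s' \<otimes> f m' k = a' \<otimes> f m0 k" for k using fsm[of s' m' k] fsm[of a' m0 k] as' m' m0 by simp
    have cs: "s \<in> carrier B" "s' \<in> carrier B" "a \<in> carrier B" "a' \<in> carrier B" using as as' by auto
    have "(s \<otimes> s') \<otimes> D = (s \<otimes> f m i) \<otimes> (s' \<otimes> f m' j) \<ominus> (s' \<otimes> f m' i) \<otimes> (s \<otimes> f m j)"
      unfolding D_def using cs fc[OF m, of i] fc[OF m, of j] fc[OF m', of i] fc[OF m', of j] by algebra
    also have "\<dots> = (a \<otimes> f m0 i) \<otimes> (a' \<otimes> f m0 j) \<ominus> (a' \<otimes> f m0 i) \<otimes> (a \<otimes> f m0 j)"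
      by (simp only: r r')
    also have "\<dots> = \<zero>" using cs fc[OF m0, of i] fc[OF m0, of j] by algebra
    finally have "(s \<otimes> s') \<otimes> D = \<zero>" .
    moreover have "s \<otimes> s' \<notin> P" using Pprime[of s s'] as as' by blast
    ultimately show "\<exists>u\<in>carrier (subring_ring B A) - P. u \<otimes>\<^bsub>subring_ring B A\<^esub> D = \<zero>\<^bsub>subring_ring B A\<^esub>"
      using as as' by (intro bexI[of _ "s \<otimes> s'"]) auto
  qed
  then have "D = \<zero>" by simp
  then show ?thesis unfolding D_def using m m' by (simp add: r_right_minus_eq)
qed

end



context ext_set begin

lemma inv_fgp:
  assumes "invertible_ideal B A L"
  shows "fg_projective (subring_ring B A) (submod_as_module B L)"
proof -
  obtain L' n xf yf where h: "is_A_submodule B A L" "is_A_submodule B A L'" "prod_submod B L L' = A"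
    "\<forall>i<(n::nat). xf i \<in> L \<and> yf i \<in> L'" "finsum B (\<lambda>i. xf i \<otimes> yf i) {..<n} = \<one>"
    using inv_data[OF assms] by blast
  note pL = subm_props[OF h(1)] and pL' = subm_props[OF h(2)]
  have inA: "m \<otimes> y \<in> A" if "m \<in> L" "y \<in> L'" for m y using prod_submod.prod[OF that, of B] h(3) by simp
  have xc: "\<And>i. i < n \<Longrightarrow> xf i \<in> carrier B" using h(4) pL(1) by blast
  have yc: "\<And>i. i < n \<Longrightarrow> yf i \<in> carrier B" using h(4) pL'(1) by blast
  have xL: "\<And>i. i < n \<Longrightarrow> xf i \<in> L" using h(4) by blast
  have yL: "\<And>i. i < n \<Longrightarrow> yf i \<in> L'" using h(4) by blast
  have mc: "\<And>m. m \<in> L \<Longrightarrow> m \<in> carrier B" using pL(1) by blast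
  define f where "f = (\<lambda>m i. if i < n then m \<otimes> yf i else \<zero>)"
  define g where "g = (\<lambda>v. finsum B (\<lambda>i. v i \<otimes> xf i) {..<n})"
  have lf: "lin_map (subring_ring B A) (submod_as_module B L) (free_module (subring_ring B A) n) f"
  proof (rule lin_mapI)
    show "f \<in> carrier (submod_as_module B L) \<rightarrow> carrier (free_module (subring_ring B A) n)"
      using inA yL by (auto simp: f_def)
    fix x y assume xy: "x \<in> carrier (submod_as_module B L)" "y \<in> carrier (submod_as_module B L)"
    then have xy: "x \<in> carrier B" "y \<in> carrier B" using mc by auto
    show "f (x \<oplus>\<^bsub>submod_as_module B L\<^esub> y) = f x \<oplus>\<^bsub>free_module (subring_ring B A) n\<^esub> f y"
      using xy yc by (auto simp: f_def l_distr)
  next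
    fix a x assume ax: "a \<in> carrier (subring_ring B A)" "x \<in> carrier (submod_as_module B L)"
    then have ax: "a \<in> carrier B" "x \<in> carrier B" using mc by auto
    show "f (a \<odot>\<^bsub>submod_as_module B L\<^esub> x) = a \<odot>\<^bsub>free_module (subring_ring B A) n\<^esub> f x"
      using ax yc by (auto simp: f_def m_assoc)
  qed
  have gL: "\<And>v. \<forall>i<n. v i \<in> A \<Longrightarrow> g v \<in> L"
    unfolding g_def by (rule subm_finsum[OF h(1)]) (use pL(5) xL in auto)
  have lg: "lin_map (subring_ring B A) (free_module (subring_ring B A) n) (submod_as_module B L) g"
  proof (rule lin_mapI)
    show "g \<in> carrier (free_module (subring_ring B A) n) \<rightarrow> carrier (submod_as_module B L)"
      using gL by auto
    fix v w assume "v \<in> carrier (free_module (subring_ring B A) n)" "w \<in> carrier (free_module (subring_ring B A) n)"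
    then have vw: "\<forall>i<n. v i \<in> A" "\<forall>i<n. w i \<in> A" by auto
    have "g (\<lambda>i. v i \<oplus> w i) = finsum B (\<lambda>i. v i \<otimes> xf i \<oplus> w i \<otimes> xf i) {..<n}"
      unfolding g_def using vw xc by (intro finsum_cong) (auto simp: l_distr)
    also have "\<dots> = g v \<oplus> g w" unfolding g_def
      using vw xc by (intro finsum_addf) auto
    finally show "g (v \<oplus>\<^bsub>free_module (subring_ring B A) n\<^esub> w) = g v \<oplus>\<^bsub>submod_as_module B L\<^esub> g w" by simp
  next
    fix a v assume "a \<in> carrier (subring_ring B A)" "v \<in> carrier (free_module (subring_ring B A) n)"
    then have av: "a \<in> A" "\<forall>i<n. v i \<in> A" by auto
    have "g (\<lambda>i. a \<otimes> v i) = finsum B (\<lambda>i. a \<otimes> (v i \<otimes> xf i)) {..<n}"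
      unfolding g_def using av xc by (intro finsum_cong) (auto simp: m_assoc)
    also have "\<dots> = a \<otimes> g v" unfolding g_def
      using av xc by (intro finsum_rdistr[symmetric]) auto
    finally show "g (a \<odot>\<^bsub>free_module (subring_ring B A) n\<^esub> v) = a \<odot>\<^bsub>submod_as_module B L\<^esub> g v" by simp
  qed
  have gf: "\<forall>m\<in>carrier (submod_as_module B L). g (f m) = m"
  proof (simp, intro ballI)
    fix m assume m: "m \<in> L"
    have "g (f m) = finsum B (\<lambda>i. m \<otimes> (xf i \<otimes> yf i)) {..<n}"
      unfolding g_def f_def using m mc xc yc by (intro finsum_cong) (auto simp: m_assoc m_comm m_lcomm)
    also have "\<dots> = m \<otimes> finsum B (\<lambda>i. xf i \<otimes> yf i) {..<n}"
      using m mc xc yc by (intro finsum_rdistr[symmetric]) auto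
    also have "\<dots> = m" using h(5) m mc by simp
    finally show "g (f m) = m" .
  qed
  show ?thesis unfolding fg_projective_def
    by (rule exI[of _ n], rule exI[of _ f], rule exI[of _ g]) (intro conjI lf lg gf)
qed

lemma inv_rank:
  assumes "invertible_ideal B A L"
  shows "const_rank_one (subring_ring B A) (submod_as_module B L)"
  unfolding const_rank_one_def
proof (intro allI impI)
  obtain L' n xf yf where h: "is_A_submodule B A L" "is_A_submodule B A L'" "prod_submod B L L' = A"
    "\<forall>i<(n::nat). xf i \<in> L \<and> yf i \<in> L'" "finsum B (\<lambda>i. xf i \<otimes> yf i) {..<n} = \<one>"
    using inv_data[OF assms] by blast
  note pL = subm_props[OF h(1)] and pL' = subm_props[OF h(2)]
  have inA: "m \<otimes> y \<in> A" if "m \<in> L" "y \<in> L'" for m y using prod_submod.prod[OF that, of B] h(3) by simp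
  have xc: "\<And>i. i < n \<Longrightarrow> xf i \<in> carrier B" using h(4) pL(1) by blast
  have yc: "\<And>i. i < n \<Longrightarrow> yf i \<in> carrier B" using h(4) pL'(1) by blast
  have xL: "\<And>i. i < n \<Longrightarrow> xf i \<in> L" using h(4) by blast
  have yL: "\<And>i. i < n \<Longrightarrow> yf i \<in> L'" using h(4) by blast
  have mc: "\<And>m. m \<in> L \<Longrightarrow> m \<in> carrier B" using pL(1) by blast
  fix P assume P: "primeideal P (subring_ring B A)"
  interpret Pp: primeideal P "subring_ring B A" by fact
  have PA: "P \<subseteq> A" using Pp.a_subset by simp
  have one: "\<one> \<notin> P" using Pp.I_notcarr Pp.one_imp_carrier by auto
  have Padd: "x \<oplus> y \<in> P" if "x \<in> P" "y \<in> P" for x y using additive_subgroup.a_closed[OF Pp.additive_subgroup_axioms that] by simp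
  have P0: "\<zero> \<in> P" using additive_subgroup.zero_closed[OF Pp.additive_subgroup_axioms] by simp
  have Pprime: "a \<in> P \<or> b \<in> P" if "a \<in> A" "b \<in> A" "a \<otimes> b \<in> P" for a b
    using Pp.I_prime[of a b] that by simp
  obtain j where j: "j < n" "xf j \<otimes> yf j \<notin> P"
  proof (rule ccontr)
    assume "\<not> thesis"
    then have "\<forall>j<n. xf j \<otimes> yf j \<in> P" using that by blast
    then have "finsum B (\<lambda>i. xf i \<otimes> yf i) {..<n} \<in> P"
      using PA P0 Padd by (intro finsum_in_set) auto
    then show False using h(5) one by simp
  qed
  have sA: "xf j \<otimes> yf j \<in> A" using inA xL yL j by blast
  show "\<exists>m0\<in>carrier (submod_as_module B L).
            (\<forall>m\<in>carrier (submod_as_module B L).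
                \<exists>a\<in>carrier (subring_ring B A).
                   \<exists>s\<in>carrier (subring_ring B A) - P.
                      \<exists>t\<in>carrier (subring_ring B A) - P.
                         t \<odot>\<^bsub>submod_as_module B L\<^esub>
                         (s \<odot>\<^bsub>submod_as_module B L\<^esub> m \<oplus>\<^bsub>submod_as_module B L\<^esub>
                          \<ominus>\<^bsub>submod_as_module B L\<^esub> (a \<odot>\<^bsub>submod_as_module B L\<^esub> m0)) =
                         \<zero>\<^bsub>submod_as_module B L\<^esub>) \<and>
            (\<forall>a\<in>carrier (subring_ring B A).
                (\<exists>t\<in>carrier (subring_ring B A) - P.
                    t \<odot>\<^bsub>submod_as_module B L\<^esub> (a \<odot>\<^bsub>submod_as_module B L\<^esub> m0) =
                    \<zero>\<^bsub>submod_as_module B L\<^esub>) \<longrightarrow>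
                (\<exists>t\<in>carrier (subring_ring B A) - P. t \<otimes>\<^bsub>subring_ring B A\<^esub> a = \<zero>\<^bsub>subring_ring B A\<^esub>))"
  proof (rule bexI[of _ "xf j"], intro conjI ballI impI)
    show "xf j \<in> carrier (submod_as_module B L)" using xL j by simp
  next
    fix m assume m: "m \<in> carrier (submod_as_module B L)"
    then have mL: "m \<in> L" by simp
    have aL: "(m \<otimes> yf j) \<otimes> xf j \<in> L" using pL(5) inA mL yL xL j by blast
    have eq: "(xf j \<otimes> yf j) \<otimes> m = (m \<otimes> yf j) \<otimes> xf j"
      using mc mL xc yc j by (simp add: m_assoc m_comm m_lcomm)
    have "\<one> \<otimes> ((xf j \<otimes> yf j) \<otimes> m \<oplus> \<ominus>\<^bsub>submod_as_module B L\<^esub> ((m \<otimes> yf j) \<otimes> xf j)) = \<zero>"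
      using SM_neg[OF h(1) aL] eq aL mc by (simp add: r_neg)
    then show "\<exists>a\<in>carrier (subring_ring B A).
                   \<exists>s\<in>carrier (subring_ring B A) - P.
                      \<exists>t\<in>carrier (subring_ring B A) - P.
                         t \<odot>\<^bsub>submod_as_module B L\<^esub>
                         (s \<odot>\<^bsub>submod_as_module B L\<^esub> m \<oplus>\<^bsub>submod_as_module B L\<^esub>
                          \<ominus>\<^bsub>submod_as_module B L\<^esub> (a \<odot>\<^bsub>submod_as_module B L\<^esub> xf j)) =
                         \<zero>\<^bsub>submod_as_module B L\<^esub>"
      using inA mL yL j sA j(2) one by (intro bexI[of _ "m \<otimes> yf j"] bexI[of _ "xf j \<otimes> yf j"] bexI[of _ "\<one>"]) auto
  next
    fix a assume a: "a \<in> carrier (subring_ring B A)"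
      "\<exists>t\<in>carrier (subring_ring B A) - P. t \<odot>\<^bsub>submod_as_module B L\<^esub> (a \<odot>\<^bsub>submod_as_module B L\<^esub> xf j) = \<zero>\<^bsub>submod_as_module B L\<^esub>"
    then obtain t where t: "t \<in> A" "t \<notin> P" "t \<otimes> (a \<otimes> xf j) = \<zero>" "a \<in> A" by auto
    have tn: "t \<otimes> (xf j \<otimes> yf j) \<notin> P" using Pprime[OF t(1) sA] t(2) j(2) by blast
    have "(t \<otimes> (xf j \<otimes> yf j)) \<otimes> a = (t \<otimes> (a \<otimes> xf j)) \<otimes> yf j"
      using t(1) t(4) xc yc j by (simp add: m_assoc m_comm m_lcomm)
    also have "\<dots> = \<zero>" using t yc j by simp
    finally show "\<exists>t\<in>carrier (subring_ring B A) - P. t \<otimes>\<^bsub>subring_ring B A\<^esub> a = \<zero>\<^bsub>subring_ring B A\<^esub>"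
      using tn t sA by (intro bexI[of _ "t \<otimes> (xf j \<otimes> yf j)"]) auto
  qed
qed

end


context ext_set begin

lemma prod_principal:
  assumes L: "is_A_submodule B A L" and x: "x \<in> carrier B"
  shows "prod_submod B L (principal_submod B A x) = (\<lambda>m. m \<otimes> x) ` L"
proof
  note p = subm_props[OF L]
  show "prod_submod B L (principal_submod B A x) \<subseteq> (\<lambda>m. m \<otimes> x) ` L"
  proof
    fix z assume "z \<in> prod_submod B L (principal_submod B A x)"
    then show "z \<in> (\<lambda>m. m \<otimes> x) ` L"
    proof (induct rule: prod_submod.induct)
      case zero
      have "\<zero> = \<zero> \<otimes> x" using x by simp
      then show ?case using p(2) by blast
    next
      case (prod m y)
      then obtain a where a: "a \<in> A" "y = a \<otimes> x" unfolding principal_submod_def by blast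
      have mc: "m \<in> carrier B" using prod p(1) by blast
      have "m \<otimes> y = (a \<otimes> m) \<otimes> x" using a mc x by (simp add: m_assoc m_comm m_lcomm)
      moreover have "a \<otimes> m \<in> L" using p(5) a prod by blast
      ultimately show ?case by blast
    next
      case (add u v)
      then obtain mu mv where m: "mu \<in> L" "u = mu \<otimes> x" "mv \<in> L" "v = mv \<otimes> x" by blast
      have "u \<oplus> v = (mu \<oplus> mv) \<otimes> x" using m p(1) x by (simp add: l_distr subsetD)
      moreover have "mu \<oplus> mv \<in> L" using p(3) m by blast
      ultimately show ?case by blast
    qed
  qed
  show "(\<lambda>m. m \<otimes> x) ` L \<subseteq> prod_submod B L (principal_submod B A x)"
  proof
    fix z assume "z \<in> (\<lambda>m. m \<otimes> x) ` L"
    then obtain m where m: "m \<in> L" "z = m \<otimes> x" by blast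
    have "x \<in> principal_submod B A x" unfolding principal_submod_def
      using x by (intro CollectI exI[of _ "\<one>"]) simp
    then show "z \<in> prod_submod B L (principal_submod B A x)"
      using m prod_submod.prod by metis
  qed
qed

lemma lin_zero_B:
  assumes f: "lin_map (subring_ring B A) (submod_as_module B L) (submod_as_module B L') f"
    and L: "is_A_submodule B A L" and L': "is_A_submodule B A L'"
  shows "f \<zero> = \<zero>"
proof -
  have z: "\<zero> \<in> L" using subm_props(2)[OF L] .
  have "f (\<zero> \<otimes> \<zero>) = \<zero> \<otimes> f \<zero>" using lin_mapD(3)[OF f, of "\<zero>" "\<zero>"] z by simp
  moreover have "f \<zero> \<in> carrier B" using lin_mapD(1)[OF f, of "\<zero>"] z subm_props(1)[OF L'] by auto
  ultimately show ?thesis by simp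
qed

lemma lin_finsum_B:
  assumes f: "lin_map (subring_ring B A) (submod_as_module B L) (submod_as_module B L') f"
    and L: "is_A_submodule B A L" and L': "is_A_submodule B A L'"
    and fin: "finite I" and cz: "\<And>i. i \<in> I \<Longrightarrow> c i \<in> A \<and> z i \<in> L"
  shows "f (finsum B (\<lambda>i. c i \<otimes> z i) I) = finsum B (\<lambda>i. c i \<otimes> f (z i)) I"
  using fin cz
proof (induct I rule: finite_induct)
  case empty then show ?case using lin_zero_B[OF f L L'] by simp
next
  case (insert x F)
  note pL = subm_props[OF L] and pL' = subm_props[OF L']
  have fL: "\<And>m. m \<in> L \<Longrightarrow> f m \<in> L'" using lin_mapD(1)[OF f] by simp
  have t1: "c x \<otimes> z x \<in> L" using insert pL(5) by blast
  have t2: "finsum B (\<lambda>i. c i \<otimes> z i) F \<in> L"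
    using insert pL(5) by (intro subm_finsum[OF L]) auto
  have Pi1: "(\<lambda>i. c i \<otimes> z i) \<in> F \<rightarrow> carrier B" using insert pL(5) pL(1) by blast
  have Pi2: "(\<lambda>i. c i \<otimes> f (z i)) \<in> F \<rightarrow> carrier B" using insert pL'(5) pL'(1) fL by blast
  have c1: "c x \<otimes> z x \<in> carrier B" using t1 pL(1) by blast
  have c2: "c x \<otimes> f (z x) \<in> carrier B" using insert pL'(5) pL'(1) fL by blast
  have "f (finsum B (\<lambda>i. c i \<otimes> z i) (insert x F)) = f (c x \<otimes> z x \<oplus> finsum B (\<lambda>i. c i \<otimes> z i) F)"
    using insert Pi1 c1 by (simp add: finsum_insert)
  also have "\<dots> = f (c x \<otimes> z x) \<oplus> f (finsum B (\<lambda>i. c i \<otimes> z i) F)"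
    using lin_mapD(2)[OF f, of "c x \<otimes> z x" "finsum B (\<lambda>i. c i \<otimes> z i) F"] t1 t2 by simp
  also have "f (c x \<otimes> z x) = c x \<otimes> f (z x)"
    using lin_mapD(3)[OF f, of "c x" "z x"] insert by simp
  also have "f (finsum B (\<lambda>i. c i \<otimes> z i) F) = finsum B (\<lambda>i. c i \<otimes> f (z i)) F"
    using insert by simp
  also have "c x \<otimes> f (z x) \<oplus> finsum B (\<lambda>i. c i \<otimes> f (z i)) F = finsum B (\<lambda>i. c i \<otimes> f (z i)) (insert x F)"
    using insert Pi2 c2 by (simp add: finsum_insert)
  finally show ?case .
qed

lemma unitI: "u \<in> carrier B \<Longrightarrow> v \<in> carrier B \<Longrightarrow> u \<otimes> v = \<one> \<Longrightarrow> u \<in> Units B"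
  unfolding Units_def by (auto simp: m_comm intro!: bexI[of _ v])

lemma iso_iff:
  assumes iL: "invertible_ideal B A L" and iL': "invertible_ideal B A L'"
  shows "mod_iso (subring_ring B A) (submod_as_module B L) (submod_as_module B L') \<longleftrightarrow>
         (\<exists>x\<in>Units B. L' = prod_submod B L (principal_submod B A x))"
proof
  obtain K n xf yf where h: "is_A_submodule B A L" "is_A_submodule B A K" "prod_submod B L K = A"
    "\<forall>i<(n::nat). xf i \<in> L \<and> yf i \<in> K" "finsum B (\<lambda>i. xf i \<otimes> yf i) {..<n} = \<one>"
    using inv_data[OF iL] by blast
  obtain K' n' xf' yf' where h': "is_A_submodule B A L'" "is_A_submodule B A K'" "prod_submod B L' K' = A"
    "\<forall>i<(n'::nat). xf' i \<in> L' \<and> yf' i \<in> K'" "finsum B (\<lambda>i. xf' i \<otimes> yf' i) {..<n'} = \<one>"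
    using inv_data[OF iL'] by blast
  note pL = subm_props[OF h(1)] and pK = subm_props[OF h(2)]
  note pL' = subm_props[OF h'(1)] and pK' = subm_props[OF h'(2)]
  have inA: "m \<otimes> y \<in> A" if "m \<in> L" "y \<in> K" for m y using prod_submod.prod[OF that, of B] h(3) by simp
  have xc: "\<And>i. i < n \<Longrightarrow> xf i \<in> carrier B" using h(4) pL(1) by blast
  have yc: "\<And>i. i < n \<Longrightarrow> yf i \<in> carrier B" using h(4) pK(1) by blast
  have mc: "\<And>m. m \<in> L \<Longrightarrow> m \<in> carrier B" using pL(1) by blast
  have mc': "\<And>m. m \<in> L' \<Longrightarrow> m \<in> carrier B" using pL'(1) by blast
  {
    assume "mod_iso (subring_ring B A) (submod_as_module B L) (submod_as_module B L')"
    then obtain f where f: "lin_map (subring_ring B A) (submod_as_module B L) (submod_as_module B L') f"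
      "bij_betw f L L'" unfolding mod_iso_def by auto
    have fL: "\<And>m. m \<in> L \<Longrightarrow> f m \<in> L'" using lin_mapD(1)[OF f(1)] by simp
    define u where "u = finsum B (\<lambda>i. yf i \<otimes> f (xf i)) {..<n}"
    have uc: "u \<in> carrier B" unfolding u_def using yc fL h(4) mc' by (intro finsum_closed) auto
    have fm: "f m = m \<otimes> u" if m: "m \<in> L" for m
    proof -
      have "finsum B (\<lambda>i. (m \<otimes> yf i) \<otimes> xf i) {..<n} = finsum B (\<lambda>i. m \<otimes> (xf i \<otimes> yf i)) {..<n}"
        using m mc xc yc by (intro finsum_cong) (auto simp: m_assoc m_comm m_lcomm)
      also have "\<dots> = m \<otimes> finsum B (\<lambda>i. xf i \<otimes> yf i) {..<n}"
        using m mc xc yc by (intro finsum_rdistr[symmetric]) auto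
      also have "\<dots> = m" using h(5) m mc by simp
      finally have e: "m = finsum B (\<lambda>i. (m \<otimes> yf i) \<otimes> xf i) {..<n}" by simp
      have "f m = finsum B (\<lambda>i. (m \<otimes> yf i) \<otimes> f (xf i)) {..<n}"
        by (subst e, rule lin_finsum_B[OF f(1) h(1) h'(1)]) (use inA h(4) m in auto)
      also have "\<dots> = finsum B (\<lambda>i. m \<otimes> (yf i \<otimes> f (xf i))) {..<n}"
        using m mc yc fL h(4) mc' by (intro finsum_cong) (auto simp: m_assoc)
      also have "\<dots> = m \<otimes> u" unfolding u_def
        using m mc yc fL h(4) mc' by (intro finsum_rdistr[symmetric]) auto
      finally show ?thesis .
    qed
    have img: "L' = (\<lambda>m. m \<otimes> u) ` L"
    proof -
      have "L' = f ` L" using f(2) unfolding bij_betw_def by simp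
      also have "\<dots> = (\<lambda>m. m \<otimes> u) ` L" using fm by (intro image_cong) auto
      finally show ?thesis .
    qed
    have "\<forall>j. \<exists>m. j < n' \<longrightarrow> m \<in> L \<and> xf' j = m \<otimes> u"
      using h'(4) img by blast
    then obtain mj where mj: "\<And>j. j < n' \<Longrightarrow> mj j \<in> L \<and> xf' j = mj j \<otimes> u" by metis
    have yc': "\<And>i. i < n' \<Longrightarrow> yf' i \<in> carrier B" using h'(4) pK'(1) by blast
    have mjc: "\<And>j. j < n' \<Longrightarrow> mj j \<in> carrier B" using mj mc by blast
    have "\<one> = finsum B (\<lambda>j. u \<otimes> (mj j \<otimes> yf' j)) {..<n'}"
      unfolding h'(5)[symmetric] using mj mjc yc' uc by (intro finsum_cong) (auto simp: m_assoc m_comm m_lcomm)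
    also have "\<dots> = u \<otimes> finsum B (\<lambda>j. mj j \<otimes> yf' j) {..<n'}"
      using mjc yc' uc by (intro finsum_rdistr[symmetric]) auto
    finally have "u \<in> Units B" using uc mjc yc'
      by (intro unitI[of u "finsum B (\<lambda>j. mj j \<otimes> yf' j) {..<n'}"]) (auto intro: finsum_closed)
    moreover have "L' = prod_submod B L (principal_submod B A u)"
      using img prod_principal[OF h(1) uc] by simp
    ultimately show "\<exists>x\<in>Units B. L' = prod_submod B L (principal_submod B A x)" by blast
  }
  {
    assume "\<exists>x\<in>Units B. L' = prod_submod B L (principal_submod B A x)"
    then obtain x where x: "x \<in> Units B" "L' = prod_submod B L (principal_submod B A x)" by blast
    have xc0: "x \<in> carrier B" using x(1) by (simp add: Units_closed)
    have img: "L' = (\<lambda>m. m \<otimes> x) ` L" using x(2) prod_principal[OF h(1) xc0] by simp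
    have lin: "lin_map (subring_ring B A) (submod_as_module B L) (submod_as_module B L') (\<lambda>m. m \<otimes> x)"
    proof (rule lin_mapI)
      show "(\<lambda>m. m \<otimes> x) \<in> carrier (submod_as_module B L) \<rightarrow> carrier (submod_as_module B L')"
        using img by auto
      fix m m' assume "m \<in> carrier (submod_as_module B L)" "m' \<in> carrier (submod_as_module B L)"
      then show "(m \<oplus>\<^bsub>submod_as_module B L\<^esub> m') \<otimes> x = m \<otimes> x \<oplus>\<^bsub>submod_as_module B L'\<^esub> m' \<otimes> x"
        using mc xc0 by (simp add: l_distr)
    next
      fix a m assume "a \<in> carrier (subring_ring B A)" "m \<in> carrier (submod_as_module B L)"
      then show "(a \<odot>\<^bsub>submod_as_module B L\<^esub> m) \<otimes> x = a \<odot>\<^bsub>submod_as_module B L'\<^esub> (m \<otimes> x)"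
        using mc xc0 by (simp add: m_assoc)
    qed
    have "inj_on (\<lambda>m. m \<otimes> x) L"
    proof
      fix m m' assume mm: "m \<in> L" "m' \<in> L" "m \<otimes> x = m' \<otimes> x"
      have "m = (m \<otimes> x) \<otimes> inv x" using mm(1) mc x(1) xc0 by (simp add: m_assoc)
      also have "\<dots> = (m' \<otimes> x) \<otimes> inv x" using mm(3) by simp
      also have "\<dots> = m'" using mm(2) mc x(1) xc0 by (simp add: m_assoc)
      finally show "m = m'" .
    qed
    then have "bij_betw (\<lambda>m. m \<otimes> x) L L'" using img unfolding bij_betw_def by simp
    then show "mod_iso (subring_ring B A) (submod_as_module B L) (submod_as_module B L')"
      unfolding mod_iso_def using lin by auto
  }
qed

end


context ext_set begin

lemma prod_Amult:
  assumes L: "is_A_submodule B A L" and L': "is_A_submodule B A L'" and a: "a \<in> A"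
    and z: "z \<in> prod_submod B L L'"
  shows "a \<otimes> z \<in> prod_submod B L L'"
  using z
proof (induct rule: prod_submod.induct)
  case zero then show ?case using a by (simp add: prod_submod.zero)
next
  case (prod x y)
  have "a \<otimes> (x \<otimes> y) = (a \<otimes> x) \<otimes> y" using a prod subm_props(1)[OF L] subm_props(1)[OF L']
    by (simp add: m_assoc subsetD)
  moreover have "a \<otimes> x \<in> L" using subm_props(5)[OF L] a prod by blast
  ultimately show ?case using prod prod_submod.prod by metis
next
  case (add u v)
  have "u \<in> carrier B" "v \<in> carrier B" using add prod_carr subm_props(1)[OF L] subm_props(1)[OF L'] by blast+
  then have "a \<otimes> (u \<oplus> v) = a \<otimes> u \<oplus> a \<otimes> v" using a by (simp add: r_distr)
  then show ?case using add prod_submod.add by metis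
qed

lemma prod_K:
  assumes L: "is_A_submodule B A L" and L': "is_A_submodule B A L'" and K: "is_A_submodule B A K"
    and LK: "prod_submod B L K = A" and y: "y \<in> K"
    and z: "z \<in> prod_submod B L L'"
  shows "z \<otimes> y \<in> L'"
  using z
proof (induct rule: prod_submod.induct)
  case zero then show ?case using y subm_props(1,2)[OF K] subm_props(2)[OF L'] by (simp add: subsetD)
next
  case (prod x y')
  have c: "x \<in> carrier B" "y' \<in> carrier B" "y \<in> carrier B"
    using prod y subm_props(1)[OF L] subm_props(1)[OF L'] subm_props(1)[OF K] by (auto simp: subsetD)
  have "x \<otimes> y' \<otimes> y = (x \<otimes> y) \<otimes> y'" using c by (simp add: m_assoc m_comm m_lcomm)
  moreover have "x \<otimes> y \<in> A" using prod_submod.prod[OF prod(1) y, of B] LK by simp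
  ultimately show ?case using subm_props(5)[OF L'] prod by simp
next
  case (add u v)
  have "u \<in> carrier B" "v \<in> carrier B" using add prod_carr subm_props(1)[OF L] subm_props(1)[OF L'] by blast+
  moreover have "y \<in> carrier B" using y subm_props(1)[OF K] by blast
  ultimately have "(u \<oplus> v) \<otimes> y = u \<otimes> y \<oplus> v \<otimes> y" by (simp add: l_distr)
  then show ?case using add subm_props(3)[OF L'] by simp
qed

lemma lin_finsum_N:
  assumes f: "lin_map (subring_ring B A) (submod_as_module B L) N f"
    and N: "module (subring_ring B A) N"
    and L: "is_A_submodule B A L"
    and fin: "finite I" and cz: "\<And>i. i \<in> I \<Longrightarrow> c i \<in> A \<and> z i \<in> L"
  shows "f (finsum B (\<lambda>i. c i \<otimes> z i) I) = finsum N (\<lambda>i. c i \<odot>\<^bsub>N\<^esub> f (z i)) I"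
  using fin cz
proof (induct I rule: finite_induct)
  interpret Nm: module "subring_ring B A" N by fact
  case empty
  have z: "\<zero> \<in> L" using subm_props(2)[OF L] .
  have "f (\<zero> \<otimes> \<zero>) = \<zero> \<odot>\<^bsub>N\<^esub> f \<zero>" using lin_mapD(3)[OF f, of "\<zero>" "\<zero>"] z by simp
  moreover have "f \<zero> \<in> carrier N" using lin_mapD(1)[OF f, of "\<zero>"] z by auto
  ultimately have "f \<zero> = \<zero>\<^bsub>N\<^esub>" using Nm.smult_l_null[of "f \<zero>"] by simp
  then show ?case by simp
next
  interpret Nm: module "subring_ring B A" N by fact
  case (insert x F)
  note pL = subm_props[OF L]
  have fL: "\<And>m. m \<in> L \<Longrightarrow> f m \<in> carrier N" using lin_mapD(1)[OF f] by simp
  have t1: "c x \<otimes> z x \<in> L" using insert pL(5) by blast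
  have t2: "finsum B (\<lambda>i. c i \<otimes> z i) F \<in> L"
    using insert pL(5) by (intro subm_finsum[OF L]) auto
  have Pi1: "(\<lambda>i. c i \<otimes> z i) \<in> F \<rightarrow> carrier B" using insert pL(5) pL(1) by blast
  have Pi2: "(\<lambda>i. c i \<odot>\<^bsub>N\<^esub> f (z i)) \<in> F \<rightarrow> carrier N" using insert fL Nm.smult_closed by simp
  have c1: "c x \<otimes> z x \<in> carrier B" using t1 pL(1) by blast
  have c2: "c x \<odot>\<^bsub>N\<^esub> f (z x) \<in> carrier N" using insert fL Nm.smult_closed by simp
  have "f (finsum B (\<lambda>i. c i \<otimes> z i) (insert x F)) = f (c x \<otimes> z x \<oplus> finsum B (\<lambda>i. c i \<otimes> z i) F)"
    using insert Pi1 c1 by (simp add: finsum_insert)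
  also have "\<dots> = f (c x \<otimes> z x) \<oplus>\<^bsub>N\<^esub> f (finsum B (\<lambda>i. c i \<otimes> z i) F)"
    using lin_mapD(2)[OF f, of "c x \<otimes> z x" "finsum B (\<lambda>i. c i \<otimes> z i) F"] t1 t2 by simp
  also have "f (c x \<otimes> z x) = c x \<odot>\<^bsub>N\<^esub> f (z x)"
    using lin_mapD(3)[OF f, of "c x" "z x"] insert by simp
  also have "f (finsum B (\<lambda>i. c i \<otimes> z i) F) = finsum N (\<lambda>i. c i \<odot>\<^bsub>N\<^esub> f (z i)) F"
    using insert by simp
  also have "c x \<odot>\<^bsub>N\<^esub> f (z x) \<oplus>\<^bsub>N\<^esub> finsum N (\<lambda>i. c i \<odot>\<^bsub>N\<^esub> f (z i)) F = finsum N (\<lambda>i. c i \<odot>\<^bsub>N\<^esub> f (z i)) (insert x F)"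
    using insert Pi2 c2 by (simp add: Nm.M.finsum_insert)
  finally show ?case .
qed

lemma tensor:
  assumes iL: "invertible_ideal B A L" and iL': "invertible_ideal B A L'"
  shows "bilin_map (subring_ring B A) (submod_as_module B L) (submod_as_module B L')
          (submod_as_module B (prod_submod B L L')) (\<lambda>x y. x \<otimes> y) \<and>
        (\<forall>(N :: ('b, 'n) module) \<beta>. module (subring_ring B A) N \<and>
           bilin_map (subring_ring B A) (submod_as_module B L) (submod_as_module B L') N \<beta> \<longrightarrow>
           (\<exists>!h. lin_map (subring_ring B A) (submod_as_module B (prod_submod B L L')) N h \<and>
                 (\<forall>x\<in>prod_submod B L L'. h x \<in> carrier N) \<and>
                 h \<in> extensional (prod_submod B L L') \<and>
                 (\<forall>x\<in>L. \<forall>y\<in>L'. h (x \<otimes> y) = \<beta> x y)))"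
proof
  obtain K n xf yf where h: "is_A_submodule B A L" "is_A_submodule B A K" "prod_submod B L K = A"
    "\<forall>i<(n::nat). xf i \<in> L \<and> yf i \<in> K" "finsum B (\<lambda>i. xf i \<otimes> yf i) {..<n} = \<one>"
    using inv_data[OF iL] by blast
  have L': "is_A_submodule B A L'" using iL' unfolding invertible_ideal_def by blast
  note pL = subm_props[OF h(1)] and pK = subm_props[OF h(2)] and pL' = subm_props[OF L']
  define P where "P = prod_submod B L L'"
  have inA: "m \<otimes> y \<in> A" if "m \<in> L" "y \<in> K" for m y using prod_submod.prod[OF that, of B] h(3) by simp
  have xc: "\<And>i. i < n \<Longrightarrow> xf i \<in> carrier B" using h(4) pL(1) by blast
  have yc: "\<And>i. i < n \<Longrightarrow> yf i \<in> carrier B" using h(4) pK(1) by blast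
  have mc: "\<And>m. m \<in> L \<Longrightarrow> m \<in> carrier B" using pL(1) by blast
  have mc': "\<And>m. m \<in> L' \<Longrightarrow> m \<in> carrier B" using pL'(1) by blast
  have Pc: "\<And>z. z \<in> P \<Longrightarrow> z \<in> carrier B" unfolding P_def using prod_carr pL(1) pL'(1) by blast
  have Pprod: "\<And>x y. x \<in> L \<Longrightarrow> y \<in> L' \<Longrightarrow> x \<otimes> y \<in> P" unfolding P_def by (rule prod_submod.prod)
  have Padd: "\<And>x y. x \<in> P \<Longrightarrow> y \<in> P \<Longrightarrow> x \<oplus> y \<in> P" unfolding P_def by (rule prod_submod.add)
  have PA: "\<And>a z. a \<in> A \<Longrightarrow> z \<in> P \<Longrightarrow> a \<otimes> z \<in> P" unfolding P_def using prod_Amult[OF h(1) L'] by blast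
  show "bilin_map (subring_ring B A) (submod_as_module B L) (submod_as_module B L')
          (submod_as_module B (prod_submod B L L')) (\<lambda>x y. x \<otimes> y)"
    unfolding bilin_map_def P_def[symmetric]
  proof (intro conjI ballI)
    show "\<And>x y. x \<in> carrier (submod_as_module B L) \<Longrightarrow> y \<in> carrier (submod_as_module B L') \<Longrightarrow>
           x \<otimes> y \<in> carrier (submod_as_module B P)" using Pprod by simp
    fix x assume x: "x \<in> carrier (submod_as_module B L)"
    show "lin_map (subring_ring B A) (submod_as_module B L') (submod_as_module B P) ((\<otimes>) x)"
    proof (rule lin_mapI)
      show "(\<otimes>) x \<in> carrier (submod_as_module B L') \<rightarrow> carrier (submod_as_module B P)" using x Pprod by simp
      fix y y' assume "y \<in> carrier (submod_as_module B L')" "y' \<in> carrier (submod_as_module B L')"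
      then show "x \<otimes> (y \<oplus>\<^bsub>submod_as_module B L'\<^esub> y') = x \<otimes> y \<oplus>\<^bsub>submod_as_module B P\<^esub> x \<otimes> y'"
        using x mc mc' by (simp add: r_distr)
    next
      fix a y assume "a \<in> carrier (subring_ring B A)" "y \<in> carrier (submod_as_module B L')"
      then show "x \<otimes> (a \<odot>\<^bsub>submod_as_module B L'\<^esub> y) = a \<odot>\<^bsub>submod_as_module B P\<^esub> (x \<otimes> y)"
        using x mc mc' by (simp add: m_lcomm)
    qed
  next
    fix y assume y: "y \<in> carrier (submod_as_module B L')"
    show "lin_map (subring_ring B A) (submod_as_module B L) (submod_as_module B P) (\<lambda>x. x \<otimes> y)"
    proof (rule lin_mapI)
      show "(\<lambda>x. x \<otimes> y) \<in> carrier (submod_as_module B L) \<rightarrow> carrier (submod_as_module B P)" using y Pprod by simp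
      fix x x' assume "x \<in> carrier (submod_as_module B L)" "x' \<in> carrier (submod_as_module B L)"
      then show "(x \<oplus>\<^bsub>submod_as_module B L\<^esub> x') \<otimes> y = x \<otimes> y \<oplus>\<^bsub>submod_as_module B P\<^esub> x' \<otimes> y"
        using y mc mc' by (simp add: l_distr)
    next
      fix a x assume "a \<in> carrier (subring_ring B A)" "x \<in> carrier (submod_as_module B L)"
      then show "(a \<odot>\<^bsub>submod_as_module B L\<^esub> x) \<otimes> y = a \<odot>\<^bsub>submod_as_module B P\<^esub> (x \<otimes> y)"
        using y mc mc' by (simp add: m_assoc)
    qed
  qed
  show "\<forall>(N :: ('b, 'n) module) \<beta>. module (subring_ring B A) N \<and>
           bilin_map (subring_ring B A) (submod_as_module B L) (submod_as_module B L') N \<beta> \<longrightarrow>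
           (\<exists>!h. lin_map (subring_ring B A) (submod_as_module B (prod_submod B L L')) N h \<and>
                 (\<forall>x\<in>prod_submod B L L'. h x \<in> carrier N) \<and>
                 h \<in> extensional (prod_submod B L L') \<and>
                 (\<forall>x\<in>L. \<forall>y\<in>L'. h (x \<otimes> y) = \<beta> x y))"
    unfolding P_def[symmetric]
  proof (intro allI impI, elim conjE)
    fix N :: "('b, 'n) module" and \<beta>
    assume N: "module (subring_ring B A) N"
      and bl: "bilin_map (subring_ring B A) (submod_as_module B L) (submod_as_module B L') N \<beta>"
    interpret Nm: module "subring_ring B A" N by fact
    have bc: "\<And>x y. x \<in> L \<Longrightarrow> y \<in> L' \<Longrightarrow> \<beta> x y \<in> carrier N" using bl unfolding bilin_map_def by simp
    have b1: "\<And>x. x \<in> L \<Longrightarrow> lin_map (subring_ring B A) (submod_as_module B L') N (\<beta> x)"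
      using bl unfolding bilin_map_def by simp
    have b2: "\<And>y. y \<in> L' \<Longrightarrow> lin_map (subring_ring B A) (submod_as_module B L) N (\<lambda>x. \<beta> x y)"
      using bl unfolding bilin_map_def by simp
    have zK: "\<And>z i. z \<in> P \<Longrightarrow> i < n \<Longrightarrow> z \<otimes> yf i \<in> L'"
      unfolding P_def using prod_K[OF h(1) L' h(2) h(3)] h(4) by blast
    define h0 where "h0 = (\<lambda>z. if z \<in> P then finsum N (\<lambda>i. \<beta> (xf i) (z \<otimes> yf i)) {..<n} else undefined)"
    have h0c: "\<And>z. z \<in> P \<Longrightarrow> h0 z \<in> carrier N"
      unfolding h0_def using bc zK h(4) by (auto intro!: Nm.M.finsum_closed)
    have lin0: "lin_map (subring_ring B A) (submod_as_module B P) N h0"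
    proof (rule lin_mapI)
      show "h0 \<in> carrier (submod_as_module B P) \<rightarrow> carrier N" using h0c by simp
      fix z z' assume "z \<in> carrier (submod_as_module B P)" "z' \<in> carrier (submod_as_module B P)"
      then have zz: "z \<in> P" "z' \<in> P" by simp_all
      have "h0 (z \<oplus> z') = finsum N (\<lambda>i. \<beta> (xf i) ((z \<oplus> z') \<otimes> yf i)) {..<n}"
        unfolding h0_def using Padd[OF zz] by simp
      also have "\<dots> = finsum N (\<lambda>i. \<beta> (xf i) (z \<otimes> yf i) \<oplus>\<^bsub>N\<^esub> \<beta> (xf i) (z' \<otimes> yf i)) {..<n}"
      proof (rule Nm.M.finsum_cong')
        show "(\<lambda>i. \<beta> (xf i) (z \<otimes> yf i) \<oplus>\<^bsub>N\<^esub> \<beta> (xf i) (z' \<otimes> yf i)) \<in> {..<n} \<rightarrow> carrier N"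
          using bc zK zz h(4) by auto
        fix i assume "i \<in> {..<n}"
        then have i: "i < n" by simp
        have "(z \<oplus> z') \<otimes> yf i = z \<otimes> yf i \<oplus> z' \<otimes> yf i" using Pc zz yc i by (simp add: l_distr)
        then show "\<beta> (xf i) ((z \<oplus> z') \<otimes> yf i) = \<beta> (xf i) (z \<otimes> yf i) \<oplus>\<^bsub>N\<^esub> \<beta> (xf i) (z' \<otimes> yf i)"
          using lin_mapD(2)[OF b1[of "xf i"], of "z \<otimes> yf i" "z' \<otimes> yf i"] h(4) i zK zz by simp
      qed simp
      also have "\<dots> = h0 z \<oplus>\<^bsub>N\<^esub> h0 z'"
        unfolding h0_def using zz bc zK h(4) by (simp add: Nm.M.finsum_addf Pi_def)
      finally show "h0 (z \<oplus>\<^bsub>submod_as_module B P\<^esub> z') = h0 z \<oplus>\<^bsub>N\<^esub> h0 z'" by simp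
    next
      fix a z assume "a \<in> carrier (subring_ring B A)" "z \<in> carrier (submod_as_module B P)"
      then have az: "a \<in> A" "z \<in> P" by simp_all
      have "h0 (a \<otimes> z) = finsum N (\<lambda>i. \<beta> (xf i) ((a \<otimes> z) \<otimes> yf i)) {..<n}"
        unfolding h0_def using PA[OF az] by simp
      also have "\<dots> = finsum N (\<lambda>i. a \<odot>\<^bsub>N\<^esub> \<beta> (xf i) (z \<otimes> yf i)) {..<n}"
      proof (rule Nm.M.finsum_cong')
        show "(\<lambda>i. a \<odot>\<^bsub>N\<^esub> \<beta> (xf i) (z \<otimes> yf i)) \<in> {..<n} \<rightarrow> carrier N"
          using bc zK az h(4) by (auto intro!: Nm.smult_closed)
        fix i assume "i \<in> {..<n}"
        then have i: "i < n" by simp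
        have "(a \<otimes> z) \<otimes> yf i = a \<otimes> (z \<otimes> yf i)" using Pc az yc i by (simp add: m_assoc)
        then show "\<beta> (xf i) ((a \<otimes> z) \<otimes> yf i) = a \<odot>\<^bsub>N\<^esub> \<beta> (xf i) (z \<otimes> yf i)"
          using lin_mapD(3)[OF b1[of "xf i"], of a "z \<otimes> yf i"] h(4) i zK az by simp
      qed simp
      also have "\<dots> = a \<odot>\<^bsub>N\<^esub> h0 z"
        unfolding h0_def using az bc zK h(4) by (simp add: Nm.finsum_smult_ldistr Pi_def)
      finally show "h0 (a \<odot>\<^bsub>submod_as_module B P\<^esub> z) = a \<odot>\<^bsub>N\<^esub> h0 z" by simp
    qed
    have ext0: "h0 \<in> extensional P" unfolding h0_def extensional_def by simp
    have gen0: "h0 (x \<otimes> y) = \<beta> x y" if xy: "x \<in> L" "y \<in> L'" for x y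
    proof -
      have "h0 (x \<otimes> y) = finsum N (\<lambda>i. \<beta> (xf i) ((x \<otimes> y) \<otimes> yf i)) {..<n}"
        unfolding h0_def using Pprod[OF xy] by simp
      also have "\<dots> = finsum N (\<lambda>i. (x \<otimes> yf i) \<odot>\<^bsub>N\<^esub> \<beta> (xf i) y) {..<n}"
      proof (rule Nm.M.finsum_cong')
        show "(\<lambda>i. (x \<otimes> yf i) \<odot>\<^bsub>N\<^esub> \<beta> (xf i) y) \<in> {..<n} \<rightarrow> carrier N"
          using bc inA xy h(4) by (auto intro!: Nm.smult_closed)
        fix i assume "i \<in> {..<n}"
        then have i: "i < n" by simp
        have "(x \<otimes> y) \<otimes> yf i = (x \<otimes> yf i) \<otimes> y" using xy mc mc' yc i by (simp add: m_assoc m_comm m_lcomm)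
        then show "\<beta> (xf i) ((x \<otimes> y) \<otimes> yf i) = (x \<otimes> yf i) \<odot>\<^bsub>N\<^esub> \<beta> (xf i) y"
          using lin_mapD(3)[OF b1[of "xf i"], of "x \<otimes> yf i" y] h(4) i xy inA by simp
      qed simp
      also have "\<dots> = \<beta> (finsum B (\<lambda>i. (x \<otimes> yf i) \<otimes> xf i) {..<n}) y"
        by (rule lin_finsum_N[OF b2[OF xy(2)] N h(1), symmetric]) (use inA xy h(4) in auto)
      also have "finsum B (\<lambda>i. (x \<otimes> yf i) \<otimes> xf i) {..<n} = finsum B (\<lambda>i. x \<otimes> (xf i \<otimes> yf i)) {..<n}"
        using xy mc xc yc by (intro finsum_cong) (auto simp: m_assoc m_comm m_lcomm)
      also have "\<dots> = x \<otimes> finsum B (\<lambda>i. xf i \<otimes> yf i) {..<n}"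
        using xy mc xc yc by (intro finsum_rdistr[symmetric]) auto
      also have "\<dots> = x" using h(5) xy mc by simp
      finally show ?thesis .
    qed
    show "\<exists>!h. lin_map (subring_ring B A) (submod_as_module B P) N h \<and>
                 (\<forall>x\<in>P. h x \<in> carrier N) \<and> h \<in> extensional P \<and>
                 (\<forall>x\<in>L. \<forall>y\<in>L'. h (x \<otimes> y) = \<beta> x y)"
    proof (rule ex1I[of _ h0])
      show "lin_map (subring_ring B A) (submod_as_module B P) N h0 \<and>
                 (\<forall>x\<in>P. h0 x \<in> carrier N) \<and> h0 \<in> extensional P \<and>
                 (\<forall>x\<in>L. \<forall>y\<in>L'. h0 (x \<otimes> y) = \<beta> x y)"
        using lin0 h0c ext0 gen0 by blast
      fix h1 assume "lin_map (subring_ring B A) (submod_as_module B P) N h1 \<and>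
                 (\<forall>x\<in>P. h1 x \<in> carrier N) \<and> h1 \<in> extensional P \<and>
                 (\<forall>x\<in>L. \<forall>y\<in>L'. h1 (x \<otimes> y) = \<beta> x y)"
      then have l1: "lin_map (subring_ring B A) (submod_as_module B P) N h1"
        and c1: "\<forall>x\<in>P. h1 x \<in> carrier N" and e1: "h1 \<in> extensional P"
        and g1: "\<forall>x\<in>L. \<forall>y\<in>L'. h1 (x \<otimes> y) = \<beta> x y" by blast+
      have zero_h: "hh \<zero> = \<zero>\<^bsub>N\<^esub>" if l: "lin_map (subring_ring B A) (submod_as_module B P) N hh"
        and c: "\<forall>x\<in>P. hh x \<in> carrier N" for hh
      proof -
        have z: "\<zero> \<in> P" unfolding P_def by (rule prod_submod.zero)
        have "hh (\<zero> \<otimes> \<zero>) = \<zero> \<odot>\<^bsub>N\<^esub> hh \<zero>" using lin_mapD(3)[OF l, of "\<zero>" "\<zero>"] z by simp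
        then show ?thesis using c z Nm.smult_l_null[of "hh \<zero>"] by simp
      qed
      have eqP: "h1 z = h0 z" if z: "z \<in> P" for z
        using z unfolding P_def
      proof (induct rule: prod_submod.induct)
        case zero then show ?case using zero_h[OF l1 c1] zero_h[OF lin0] h0c by simp
      next
        case (prod x y) then show ?case using g1 gen0 by simp
      next
        case (add u v)
        have uv: "u \<in> P" "v \<in> P" using add unfolding P_def by simp_all
        have "h1 (u \<oplus> v) = h1 u \<oplus>\<^bsub>N\<^esub> h1 v" using lin_mapD(2)[OF l1, of u v] uv by simp
        moreover have "h0 (u \<oplus> v) = h0 u \<oplus>\<^bsub>N\<^esub> h0 v" using lin_mapD(2)[OF lin0, of u v] uv by simp
        ultimately show ?case using add by simp
      qed
      show "h1 = h0"
      proof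
        fix z show "h1 z = h0 z"
        proof (cases "z \<in> P")
          case True then show ?thesis using eqP by simp
        next
          case False then show ?thesis using e1 ext0 unfolding extensional_def by simp
        qed
      qed
    qed
  qed
qed

end



context ext_set begin

lemma finprod_notin:
  assumes Q: "primeideal Q B" and fin: "finite S" and h: "\<And>x. x \<in> S \<Longrightarrow> h x \<in> carrier B - Q"
  shows "finprod B h S \<notin> Q"
  using fin h
proof (induct S rule: finite_induct)
  interpret Qp: primeideal Q B by fact
  case empty
  have "\<one> \<notin> Q" using Qp.I_notcarr Qp.one_imp_carrier by auto
  then show ?case by simp
next
  interpret Qp: primeideal Q B by fact
  case (insert x F)
  have Pi: "h \<in> F \<rightarrow> carrier B" using insert by auto
  have "finprod B h (insert x F) = h x \<otimes> finprod B h F" using insert Pi by (simp add: finprod_insert)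
  moreover have "finprod B h F \<in> carrier B" using Pi by (simp add: finprod_closed)
  ultimately show ?case using insert Qp.I_prime[of "h x" "finprod B h F"] by auto
qed

lemma lam_exists:
  assumes fin: "finite MM" and MMd: "MM = {I. maximalideal I B}"
  shows "\<exists>lam. \<forall>Q\<in>MM. lam Q \<in> carrier B \<and> lam Q \<notin> Q \<and> (\<forall>Q'\<in>MM. Q' \<noteq> Q \<longrightarrow> lam Q \<in> Q')"
proof -
  have sep0: "\<exists>a. a \<in> Q' \<and> a \<notin> Q" if QQ: "Q \<in> MM" "Q' \<in> MM" "Q \<noteq> Q'" for Q Q'
  proof -
    have Q: "maximalideal Q B" using QQ(1) unfolding MMd by simp
    have Q': "maximalideal Q' B" using QQ(2) unfolding MMd by simp
    have idQ: "ideal Q B" using maximalideal.axioms(1)[OF Q] .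
    have Qc: "Q \<subseteq> carrier B" using ideal.Icarr[OF idQ] by blast
    have nc: "Q \<noteq> carrier B" using maximalideal.I_notcarr[OF Q] by simp
    have "\<not> Q' \<subseteq> Q"
    proof
      assume sub: "Q' \<subseteq> Q"
      have "Q = Q' \<or> Q = carrier B" using maximalideal.I_maximal[OF Q' idQ sub Qc] .
      then show False using QQ(3) nc by simp
    qed
    then show ?thesis by (simp add: subset_iff)
  qed
  have sep: "\<exists>a. (fst p \<in> MM \<and> snd p \<in> MM \<and> fst p \<noteq> snd p) \<longrightarrow> a \<in> snd p \<and> a \<notin> fst p" for p
  proof (cases "fst p \<in> MM \<and> snd p \<in> MM \<and> fst p \<noteq> snd p")
    case True
    then obtain a where "a \<in> snd p" "a \<notin> fst p" using sep0[of "fst p" "snd p"] by blast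
    then show ?thesis by blast
  next
    case False
    show ?thesis
    proof (rule exI[of _ undefined], rule impI)
      assume "fst p \<in> MM \<and> snd p \<in> MM \<and> fst p \<noteq> snd p"
      with False show "undefined \<in> snd p \<and> undefined \<notin> fst p" by contradiction
    qed
  qed
  have sep': "\<forall>p. \<exists>a. (fst p \<in> MM \<and> snd p \<in> MM \<and> fst p \<noteq> snd p) \<longrightarrow> a \<in> snd p \<and> a \<notin> fst p"
    by (intro allI) (rule sep)
  from choice[OF sep'] obtain sel where
    sel0: "\<forall>p. (fst p \<in> MM \<and> snd p \<in> MM \<and> fst p \<noteq> snd p) \<longrightarrow> sel p \<in> snd p \<and> sel p \<notin> fst p" ..
  have sel: "(fst p \<in> MM \<and> snd p \<in> MM \<and> fst p \<noteq> snd p) \<longrightarrow> sel p \<in> snd p \<and> sel p \<notin> fst p" for p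
    by (rule spec[OF sel0])
  have selc: "sel (Q, Q') \<in> carrier B" if "Q \<in> MM" "Q' \<in> MM" "Q \<noteq> Q'" for Q Q'
  proof -
    have s1: "sel (Q, Q') \<in> Q'" using sel[of "(Q, Q')"] that by simp
    have "maximalideal Q' B" using that MMd by simp
    then have "ideal Q' B" by (rule maximalideal.axioms(1))
    then show ?thesis using s1 by (rule ideal.Icarr)
  qed
  define lam where "lam Q = finprod B (\<lambda>Q'. sel (Q, Q')) (MM - {Q})" for Q
  show ?thesis
  proof (intro exI[of _ lam] ballI conjI impI)
    fix Q assume Q: "Q \<in> MM"
    have Pi: "(\<lambda>Q'. sel (Q, Q')) \<in> MM - {Q} \<rightarrow> carrier B" using selc Q by auto
    show "lam Q \<in> carrier B" unfolding lam_def using Pi by (simp add: finprod_closed)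
    have Qp: "primeideal Q B" using Q MMd maximalideal_prime by simp
    have selQ: "sel (Q, Q') \<in> carrier B - Q" if "Q' \<in> MM - {Q}" for Q'
    proof -
      have "sel (Q, Q') \<notin> Q" using sel[of "(Q, Q')"] that Q by auto
      then show ?thesis using selc[of Q Q'] that Q by auto
    qed
    show "lam Q \<notin> Q" unfolding lam_def
      by (rule finprod_notin[OF Qp]) (use fin selQ in auto)
    fix Q' assume Q': "Q' \<in> MM" "Q' \<noteq> Q"
    have e: "MM - {Q} = insert Q' (MM - {Q} - {Q'})" using Q' by auto
    have Pi': "(\<lambda>Q'. sel (Q, Q')) \<in> MM - {Q} - {Q'} \<rightarrow> carrier B" using selc Q by auto
    have "lam Q = sel (Q, Q') \<otimes> finprod B (\<lambda>Q'. sel (Q, Q')) (MM - {Q} - {Q'})"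
      unfolding lam_def by (subst e, rule finprod_insert) (use fin Pi' selc Q Q' in auto)
    moreover have "sel (Q, Q') \<in> Q'" using sel[of "(Q, Q')"] Q Q' by auto
    moreover have "finprod B (\<lambda>Q'. sel (Q, Q')) (MM - {Q} - {Q'}) \<in> carrier B" using Pi' by (simp add: finprod_closed)
    moreover have "ideal Q' B" using Q' MMd maximalideal.axioms(1) by simp
    ultimately show "lam Q \<in> Q'" using ideal.I_r_closed[of Q' B "sel (Q, Q')"] by simp
  qed
qed

end

context surj_set begin

lemma contract_prime:
  assumes Q: "maximalideal Q B"
  shows "primeideal (Q \<inter> A) (subring_ring B A)"
proof -
  interpret Qm: maximalideal Q B by fact
  have Qp: "primeideal Q B" using maximalideal_prime[OF Q] .
  interpret Rr: cring "subring_ring B A" by (rule Rcr)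
  have one: "\<one> \<notin> Q" using Qm.I_notcarr Qm.one_imp_carrier by auto
  have Qadd: "x \<oplus> y \<in> Q" if "x \<in> Q" "y \<in> Q" for x y
    using additive_subgroup.a_closed[OF Qm.additive_subgroup_axioms that] .
  have Qneg: "\<ominus> x \<in> Q" if "x \<in> Q" for x
    using additive_subgroup.a_inv_closed[OF Qm.additive_subgroup_axioms that] .
  have Q0: "\<zero> \<in> Q" using additive_subgroup.zero_closed[OF Qm.additive_subgroup_axioms] .
  show ?thesis
  proof (rule primeidealI)
    show "ideal (Q \<inter> A) (subring_ring B A)"
    proof (rule idealI)
      show "ring (subring_ring B A)" by (rule Rr.ring_axioms)
      show "subgroup (Q \<inter> A) (add_monoid (subring_ring B A))"
      proof (rule subgroup.intro)
        show "Q \<inter> A \<subseteq> carrier (add_monoid (subring_ring B A))" by auto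
        show "\<And>x y. x \<in> Q \<inter> A \<Longrightarrow> y \<in> Q \<inter> A \<Longrightarrow> x \<otimes>\<^bsub>add_monoid (subring_ring B A)\<^esub> y \<in> Q \<inter> A"
          using Qadd by simp
        show "\<one>\<^bsub>add_monoid (subring_ring B A)\<^esub> \<in> Q \<inter> A" using Q0 by simp
        fix x assume x: "x \<in> Q \<inter> A"
        have "inv\<^bsub>add_monoid (subring_ring B A)\<^esub> x = \<ominus>\<^bsub>subring_ring B A\<^esub> x" by (simp add: a_inv_def)
        also have "\<dots> = \<ominus> x" using R_neg x by simp
        finally show "inv\<^bsub>add_monoid (subring_ring B A)\<^esub> x \<in> Q \<inter> A" using Qneg x by simp
      qed
      show "\<And>a x. a \<in> Q \<inter> A \<Longrightarrow> x \<in> carrier (subring_ring B A) \<Longrightarrow> x \<otimes>\<^bsub>subring_ring B A\<^esub> a \<in> Q \<inter> A"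
        using Qm.I_l_closed by simp
      show "\<And>a x. a \<in> Q \<inter> A \<Longrightarrow> x \<in> carrier (subring_ring B A) \<Longrightarrow> a \<otimes>\<^bsub>subring_ring B A\<^esub> x \<in> Q \<inter> A"
        using Qm.I_r_closed by simp
    qed
    show "cring (subring_ring B A)" by (rule Rcr)
    show "carrier (subring_ring B A) \<noteq> Q \<inter> A" using one by auto
    show "\<And>a b. a \<in> carrier (subring_ring B A) \<Longrightarrow> b \<in> carrier (subring_ring B A) \<Longrightarrow>
           a \<otimes>\<^bsub>subring_ring B A\<^esub> b \<in> Q \<inter> A \<Longrightarrow> a \<in> Q \<inter> A \<or> b \<in> Q \<inter> A"
      using primeideal.I_prime[OF Qp] by simp
  qed
qed

lemma stepC:
  assumes Q: "maximalideal Q B"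
  shows "\<exists>m\<in>carrier M. \<exists>i<n. f m i \<notin> Q"
proof (rule ccontr)
  assume "\<not> ?thesis"
  then have allQ: "\<And>m i. m \<in> carrier M \<Longrightarrow> i < n \<Longrightarrow> f m i \<in> Q" by blast
  define P where "P = Q \<inter> A"
  have P: "primeideal P (subring_ring B A)" using contract_prime[OF Q] P_def by simp
  interpret Mm: module "subring_ring B A" M by (rule Mmod)
  interpret Pp: primeideal P "subring_ring B A" by fact
  have PA: "P \<subseteq> A" unfolding P_def by auto
  have Padd: "x \<oplus> y \<in> P" if "x \<in> P" "y \<in> P" for x y
    using additive_subgroup.a_closed[OF Pp.additive_subgroup_axioms that] by simp
  have Pmul: "a \<otimes> p \<in> P" if "a \<in> A" "p \<in> P" for a p using Pp.I_l_closed[of p a] that by simp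
  have Pprime: "a \<in> P \<or> b \<in> P" if "a \<in> A" "b \<in> A" "a \<otimes> b \<in> P" for a b
    using Pp.I_prime[of a b] that by simp
  have one: "\<one> \<notin> P" using Pp.I_notcarr Pp.one_imp_carrier by auto
  have allP: "\<And>m i. m \<in> carrier M \<Longrightarrow> i < n \<Longrightarrow> f m i \<in> P" unfolding P_def using allQ fA by blast
  obtain m0 where m0: "m0 \<in> carrier M" and loc: "\<forall>m\<in>carrier M. \<exists>a\<in>A. \<exists>s\<in>A - P. s \<odot>\<^bsub>M\<^esub> m = a \<odot>\<^bsub>M\<^esub> m0"
    and tf: "\<forall>a\<in>A. (\<exists>t\<in>A - P. t \<odot>\<^bsub>M\<^esub> (a \<odot>\<^bsub>M\<^esub> m0) = \<zero>\<^bsub>M\<^esub>) \<longrightarrow> (\<exists>t\<in>A - P. t \<otimes> a = \<zero>)"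
    using rank_data[OF P] by blast
  let ?v = "f m0"
  have v: "\<forall>i<n. ?v i \<in> A" "\<forall>i\<ge>n. ?v i = \<zero>" using fA fz m0 by auto
  have claim: "k \<le> n \<Longrightarrow> \<exists>s\<in>A - P. \<exists>p\<in>P. s \<odot>\<^bsub>M\<^esub> g (tr k ?v) = p \<odot>\<^bsub>M\<^esub> m0" for k
  proof (induct k)
    case 0
    have "\<one> \<odot>\<^bsub>M\<^esub> g (tr 0 ?v) = \<zero> \<odot>\<^bsub>M\<^esub> m0"
      using tr_0 g0 Mm.smult_l_null[OF m0] Mm.smult_one[of "\<zero>\<^bsub>M\<^esub>"] by simp
    moreover have "\<zero> \<in> P" using additive_subgroup.zero_closed[OF Pp.additive_subgroup_axioms] by simp
    ultimately show ?case using one by (intro bexI[of _ "\<one>"] bexI[of _ "\<zero>"]) auto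
  next
    case (Suc k)
    then have k: "k < n" by simp
    obtain s p where sp: "s \<in> A" "s \<notin> P" "p \<in> P" "s \<odot>\<^bsub>M\<^esub> g (tr k ?v) = p \<odot>\<^bsub>M\<^esub> m0"
      using Suc by auto
    obtain ak sk where ak: "ak \<in> A" "sk \<in> A" "sk \<notin> P" "sk \<odot>\<^bsub>M\<^esub> g (ev k) = ak \<odot>\<^bsub>M\<^esub> m0"
      using loc gev[OF k] by blast
    have X: "g (tr k ?v) \<in> carrier M" using gM tr_A v by blast
    have Y: "g (ev k) \<in> carrier M" using gev[OF k] .
    have vk: "?v k \<in> P" using allP m0 k by blast
    have vkA: "?v k \<in> A" using vk PA by blast
    have pA: "p \<in> A" using sp PA by blast
    have "(s \<otimes> sk) \<odot>\<^bsub>M\<^esub> g (tr (Suc k) ?v) =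
          (s \<otimes> sk) \<odot>\<^bsub>M\<^esub> g (tr k ?v) \<oplus>\<^bsub>M\<^esub> (s \<otimes> sk) \<odot>\<^bsub>M\<^esub> (?v k \<odot>\<^bsub>M\<^esub> g (ev k))"
      using tr_Suc[OF k v] Mm.smult_r_distr[of "s \<otimes> sk"] X Y sp ak vkA by simp
    also have "(s \<otimes> sk) \<odot>\<^bsub>M\<^esub> g (tr k ?v) = sk \<odot>\<^bsub>M\<^esub> (s \<odot>\<^bsub>M\<^esub> g (tr k ?v))"
      using Mm.smult_assoc1[of sk s "g (tr k ?v)"] X sp ak by (simp add: m_comm)
    also have "\<dots> = (sk \<otimes> p) \<odot>\<^bsub>M\<^esub> m0" using sp(4) Mm.smult_assoc1[of sk p m0] m0 ak pA by simp
    also have "(s \<otimes> sk) \<odot>\<^bsub>M\<^esub> (?v k \<odot>\<^bsub>M\<^esub> g (ev k)) = (s \<otimes> ?v k) \<odot>\<^bsub>M\<^esub> (sk \<odot>\<^bsub>M\<^esub> g (ev k))"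
    proof -
      have "(s \<otimes> sk) \<odot>\<^bsub>M\<^esub> (?v k \<odot>\<^bsub>M\<^esub> g (ev k)) = ((s \<otimes> sk) \<otimes> ?v k) \<odot>\<^bsub>M\<^esub> g (ev k)"
        using Mm.smult_assoc1[of "s \<otimes> sk" "?v k" "g (ev k)"] Y sp ak vkA by simp
      also have "(s \<otimes> sk) \<otimes> ?v k = (s \<otimes> ?v k) \<otimes> sk" using sp ak vkA by (simp add: m_ac)
      also have "((s \<otimes> ?v k) \<otimes> sk) \<odot>\<^bsub>M\<^esub> g (ev k) = (s \<otimes> ?v k) \<odot>\<^bsub>M\<^esub> (sk \<odot>\<^bsub>M\<^esub> g (ev k))"
        using Mm.smult_assoc1[of "s \<otimes> ?v k" sk "g (ev k)"] Y sp ak vkA by simp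
      finally show ?thesis .
    qed
    also have "\<dots> = ((s \<otimes> ?v k) \<otimes> ak) \<odot>\<^bsub>M\<^esub> m0"
      using ak(4) Mm.smult_assoc1[of "s \<otimes> ?v k" ak m0] m0 ak sp vkA by simp
    also have "(sk \<otimes> p) \<odot>\<^bsub>M\<^esub> m0 \<oplus>\<^bsub>M\<^esub> ((s \<otimes> ?v k) \<otimes> ak) \<odot>\<^bsub>M\<^esub> m0 = (sk \<otimes> p \<oplus> (s \<otimes> ?v k) \<otimes> ak) \<odot>\<^bsub>M\<^esub> m0"
      using Mm.smult_l_distr[of "sk \<otimes> p" "(s \<otimes> ?v k) \<otimes> ak" m0] m0 ak sp vkA pA by simp
    finally have e: "(s \<otimes> sk) \<odot>\<^bsub>M\<^esub> g (tr (Suc k) ?v) = (sk \<otimes> p \<oplus> (s \<otimes> ?v k) \<otimes> ak) \<odot>\<^bsub>M\<^esub> m0" .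
    have "sk \<otimes> p \<oplus> (s \<otimes> ?v k) \<otimes> ak \<in> P"
    proof -
      have "sk \<otimes> p \<in> P" using Pmul ak sp by blast
      moreover have "s \<otimes> ?v k \<in> P" using Pmul sp vk by blast
      then have "ak \<otimes> (s \<otimes> ?v k) \<in> P" using Pmul ak by blast
      then have "(s \<otimes> ?v k) \<otimes> ak \<in> P" using ak sp vkA by (simp add: m_comm)
      ultimately show ?thesis using Padd by blast
    qed
    moreover have "s \<otimes> sk \<in> A - P" using Pprime[of s sk] sp ak by auto
    ultimately show ?case using e by blast
  qed
  obtain s p where sp: "s \<in> A" "s \<notin> P" "p \<in> P" "s \<odot>\<^bsub>M\<^esub> m0 = p \<odot>\<^bsub>M\<^esub> m0"
    using claim[of n] tr_n[OF v(2)] gf m0 by auto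
  have pA: "p \<in> A" using sp PA by blast
  define a where "a = s \<oplus> \<ominus> p"
  have aA: "a \<in> A" unfolding a_def using sp pA by simp
  have "a \<odot>\<^bsub>M\<^esub> m0 = s \<odot>\<^bsub>M\<^esub> m0 \<oplus>\<^bsub>M\<^esub> (\<ominus>\<^bsub>subring_ring B A\<^esub> p) \<odot>\<^bsub>M\<^esub> m0"
    unfolding a_def using Mm.smult_l_distr[of s "\<ominus>\<^bsub>subring_ring B A\<^esub> p" m0] R_neg[OF pA] sp pA m0 by simp
  also have "\<dots> = p \<odot>\<^bsub>M\<^esub> m0 \<oplus>\<^bsub>M\<^esub> \<ominus>\<^bsub>M\<^esub> (p \<odot>\<^bsub>M\<^esub> m0)"
    using Mm.smult_l_minus[of p m0] sp pA m0 by simp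
  also have "\<dots> = \<zero>\<^bsub>M\<^esub>" using pA m0 by (simp add: Mm.M.r_neg)
  finally have am: "a \<odot>\<^bsub>M\<^esub> m0 = \<zero>\<^bsub>M\<^esub>" .
  have "\<one> \<odot>\<^bsub>M\<^esub> (a \<odot>\<^bsub>M\<^esub> m0) = \<zero>\<^bsub>M\<^esub>" using am by simp
  then have "\<exists>t\<in>A - P. t \<odot>\<^bsub>M\<^esub> (a \<odot>\<^bsub>M\<^esub> m0) = \<zero>\<^bsub>M\<^esub>" using one by (intro bexI[of _ "\<one>"]) auto
  then have "\<exists>t\<in>A - P. t \<otimes> a = \<zero>" using tf aA by blast
  then obtain t where t: "t \<in> A" "t \<notin> P" "t \<otimes> a = \<zero>" by blast
  have tc: "t \<in> carrier B" "s \<in> carrier B" "p \<in> carrier B" using t sp pA by auto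
  have "t \<otimes> s = t \<otimes> p \<oplus> t \<otimes> a" unfolding a_def using tc by algebra
  then have "t \<otimes> s = t \<otimes> p" using t tc by simp
  moreover have "t \<otimes> p \<in> P" using Pmul t sp by blast
  ultimately show False using Pprime[of t s] t sp by auto
qed

end



context ext_set begin

lemma finsum_split:
  assumes "finite S" "x \<in> S" "\<And>y. y \<in> S \<Longrightarrow> h y \<in> carrier B"
  shows "finsum B h S = h x \<oplus> finsum B h (S - {x})"
proof -
  have "S = insert x (S - {x})" using assms(2) by auto
  then have "finsum B h S = finsum B h (insert x (S - {x}))" by simp
  also have "\<dots> = h x \<oplus> finsum B h (S - {x})"
    using assms by (intro finsum_insert) auto
  finally show ?thesis .
qed

lemma finsum_ideal:
  assumes "ideal I B" "finite S" "\<And>y. y \<in> S \<Longrightarrow> h y \<in> I"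
  shows "finsum B h S \<in> I"
proof (rule finsum_in_set)
  show "I \<subseteq> carrier B" using ideal.Icarr[OF assms(1)] by blast
  show "\<zero> \<in> I" using additive_subgroup.zero_closed[OF ideal.axioms(1)[OF assms(1)]] .
  show "\<And>x y. x \<in> I \<Longrightarrow> y \<in> I \<Longrightarrow> x \<oplus> y \<in> I"
    using additive_subgroup.a_closed[OF ideal.axioms(1)[OF assms(1)]] by blast
qed (use assms in auto)

lemma sum_mid:
  assumes "finite J" "c \<in> carrier B" "y \<in> carrier B" "\<And>j. j \<in> J \<Longrightarrow> t j \<in> carrier B"
  shows "(c \<otimes> finsum B t J) \<otimes> y = finsum B (\<lambda>j. (c \<otimes> t j) \<otimes> y) J"
proof -
  have "c \<otimes> finsum B t J = finsum B (\<lambda>j. c \<otimes> t j) J"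
    using assms by (intro finsum_rdistr) auto
  moreover have "finsum B (\<lambda>j. c \<otimes> t j) J \<otimes> y = finsum B (\<lambda>j. (c \<otimes> t j) \<otimes> y) J"
    using assms by (intro finsum_ldistr) auto
  ultimately show ?thesis by simp
qed

end

context surj_set begin

lemma surj_main:
  assumes fin: "finite {I. maximalideal I B}"
  shows "\<exists>L. invertible_ideal B A L \<and> mod_iso (subring_ring B A) (submod_as_module B L) M"
proof -
  interpret Mm: module "subring_ring B A" M by (rule Mmod)
  define MM where "MM = {I. maximalideal I B}"
  have finMM[simp]: "finite MM" using fin MM_def by simp
  obtain lam where lam: "\<forall>Q\<in>MM. lam Q \<in> carrier B \<and> lam Q \<notin> Q \<and> (\<forall>Q'\<in>MM. Q' \<noteq> Q \<longrightarrow> lam Q \<in> Q')"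
    using lam_exists[OF finMM MM_def] by blast
  have lc: "\<And>Q. Q \<in> MM \<Longrightarrow> lam Q \<in> carrier B" using lam by blast
  have lnot: "\<And>Q. Q \<in> MM \<Longrightarrow> lam Q \<notin> Q" using lam by blast
  have lin: "\<And>Q Q'. Q \<in> MM \<Longrightarrow> Q' \<in> MM \<Longrightarrow> Q' \<noteq> Q \<Longrightarrow> lam Q \<in> Q'" using lam by blast
  have ex: "\<forall>Q. \<exists>p. Q \<in> MM \<longrightarrow> fst p \<in> carrier M \<and> snd p < n \<and> f (fst p) (snd p) \<notin> Q"
  proof
    fix Q show "\<exists>p. Q \<in> MM \<longrightarrow> fst p \<in> carrier M \<and> snd p < n \<and> f (fst p) (snd p) \<notin> Q"
    proof (cases "Q \<in> MM")
      case True
      then obtain m i where "m \<in> carrier M" "i < n" "f m i \<notin> Q" using stepC MM_def by blast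
      then show ?thesis by (intro exI[of _ "(m, i)"]) simp
    qed simp
  qed
  from choice[OF ex] obtain sp where sp: "\<forall>Q. Q \<in> MM \<longrightarrow> fst (sp Q) \<in> carrier M \<and> snd (sp Q) < n \<and> f (fst (sp Q)) (snd (sp Q)) \<notin> Q"
    by blast
  define mQ where "mQ Q = fst (sp Q)" for Q
  define iQ where "iQ Q = snd (sp Q)" for Q
  have mQ: "\<And>Q. Q \<in> MM \<Longrightarrow> mQ Q \<in> carrier M" unfolding mQ_def using sp by blast
  have iQ: "\<And>Q. Q \<in> MM \<Longrightarrow> iQ Q < n" unfolding iQ_def using sp by blast
  have nz: "\<And>Q. Q \<in> MM \<Longrightarrow> f (mQ Q) (iQ Q) \<notin> Q" unfolding mQ_def iQ_def using sp by blast
  define w where "w i = finsum B (\<lambda>Q. lam Q \<otimes> f (mQ Q) i) MM" for i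
  define psi where "psi v = finsum B (\<lambda>Q. lam Q \<otimes> v (iQ Q)) MM" for v
  define u where "u = psi w"
  have wc: "\<And>i. w i \<in> carrier B" unfolding w_def using lc mQ by (intro finsum_closed) auto
  have psic: "\<And>v. (\<And>i. v i \<in> carrier B) \<Longrightarrow> psi v \<in> carrier B"
    unfolding psi_def using lc by (intro finsum_closed) auto
  have uc: "u \<in> carrier B" unfolding u_def using psic wc by blast
  have uU: "u \<in> Units B"
  proof (rule not_in_max_unit[OF uc])
    fix Q0 assume Q0m: "maximalideal Q0 B"
    then have Q0: "Q0 \<in> MM" using MM_def by simp
    interpret Qm: maximalideal Q0 B by fact
    have Q0p: "primeideal Q0 B" using maximalideal_prime[OF Q0m] .
    have Qid: "ideal Q0 B" by (rule Qm.is_ideal)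
    have Qc: "\<And>x. x \<in> Q0 \<Longrightarrow> x \<in> carrier B" using Qm.Icarr by blast
    define c0 where "c0 = f (mQ Q0) (iQ Q0)"
    define r1 where "r1 = finsum B (\<lambda>Q. lam Q \<otimes> f (mQ Q) (iQ Q0)) (MM - {Q0})"
    define r2 where "r2 = finsum B (\<lambda>Q. lam Q \<otimes> w (iQ Q)) (MM - {Q0})"
    have r1Q: "r1 \<in> Q0" unfolding r1_def
    proof (rule finsum_ideal[OF Qid finite_Diff[OF finMM]])
      fix Q assume QQ: "Q \<in> MM - {Q0}"
      then have "lam Q \<in> Q0" using lin[of Q Q0] Q0 by auto
      moreover have "f (mQ Q) (iQ Q0) \<in> carrier B" using mQ QQ by simp
      ultimately show "lam Q \<otimes> f (mQ Q) (iQ Q0) \<in> Q0" using Qm.I_r_closed by blast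
    qed
    have r2Q: "r2 \<in> Q0" unfolding r2_def
    proof (rule finsum_ideal[OF Qid finite_Diff[OF finMM]])
      fix Q assume QQ: "Q \<in> MM - {Q0}"
      then have "lam Q \<in> Q0" using lin[of Q Q0] Q0 by auto
      then show "lam Q \<otimes> w (iQ Q) \<in> Q0" using Qm.I_r_closed wc by blast
    qed
    have c0c: "c0 \<in> carrier B" unfolding c0_def using mQ Q0 by simp
    have wQ: "w (iQ Q0) = lam Q0 \<otimes> c0 \<oplus> r1"
      unfolding w_def r1_def c0_def using finMM Q0 lc mQ by (intro finsum_split) auto
    have ue: "u = lam Q0 \<otimes> w (iQ Q0) \<oplus> r2"
      unfolding u_def psi_def r2_def using finMM Q0 lc wc by (intro finsum_split) auto
    have r1c: "r1 \<in> carrier B" "r2 \<in> carrier B" using r1Q r2Q Qc by auto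
    have l0: "lam Q0 \<in> carrier B" using lc Q0 by simp
    have ue2: "lam Q0 \<otimes> (lam Q0 \<otimes> c0) = u \<ominus> (lam Q0 \<otimes> r1 \<oplus> r2)"
      unfolding ue wQ using l0 c0c r1c by algebra
    show "u \<notin> Q0"
    proof
      assume uQ: "u \<in> Q0"
      have "lam Q0 \<otimes> r1 \<in> Q0" using Qm.I_l_closed r1Q l0 by blast
      then have "lam Q0 \<otimes> r1 \<oplus> r2 \<in> Q0" using r2Q Qm.a_closed by blast
      then have "u \<ominus> (lam Q0 \<otimes> r1 \<oplus> r2) \<in> Q0" using uQ unfolding a_minus_def
        using Qm.a_closed Qm.a_inv_closed by blast
      then have "lam Q0 \<otimes> (lam Q0 \<otimes> c0) \<in> Q0" using ue2 by simp
      then have "lam Q0 \<in> Q0 \<or> c0 \<in> Q0"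
        using primeideal.I_prime[OF Q0p] l0 c0c by (metis m_closed)
      then show False using lnot Q0 nz c0_def by blast
    qed
  qed
  have mc: "\<And>m i. m \<in> carrier M \<Longrightarrow> f m i \<in> carrier B" by simp
  have K: "u \<otimes> f m i = psi (f m) \<otimes> w i" if m: "m \<in> carrier M" for m i
  proof -
    have "u \<otimes> f m i = finsum B (\<lambda>Q. (lam Q \<otimes> w (iQ Q)) \<otimes> f m i) MM"
      unfolding u_def psi_def using finMM lc wc m by (intro finsum_ldistr) auto
    also have "\<dots> = finsum B (\<lambda>Q. finsum B (\<lambda>Q'. (lam Q \<otimes> lam Q') \<otimes> (f m (iQ Q) \<otimes> f (mQ Q') i)) MM) MM"
    proof (rule finsum_cong')
      fix Q assume Q: "Q \<in> MM"
      have "(lam Q \<otimes> w (iQ Q)) \<otimes> f m i = finsum B (\<lambda>Q'. (lam Q \<otimes> (lam Q' \<otimes> f (mQ Q') (iQ Q))) \<otimes> f m i) MM"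
        unfolding w_def using finMM lc mQ m Q by (intro sum_mid) auto
      also have "\<dots> = finsum B (\<lambda>Q'. (lam Q \<otimes> lam Q') \<otimes> (f m (iQ Q) \<otimes> f (mQ Q') i)) MM"
      proof (rule finsum_cong')
        fix Q' assume Q': "Q' \<in> MM"
        have "f (mQ Q') (iQ Q) \<otimes> f m i = f m (iQ Q) \<otimes> f (mQ Q') i"
          using minors[OF mQ[OF Q'] m] by simp
        moreover have "(lam Q \<otimes> (lam Q' \<otimes> f (mQ Q') (iQ Q))) \<otimes> f m i = (lam Q \<otimes> lam Q') \<otimes> (f (mQ Q') (iQ Q) \<otimes> f m i)"
          using lc Q Q' mQ m by (simp add: m_ac)
        ultimately show "(lam Q \<otimes> (lam Q' \<otimes> f (mQ Q') (iQ Q))) \<otimes> f m i = (lam Q \<otimes> lam Q') \<otimes> (f m (iQ Q) \<otimes> f (mQ Q') i)"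
          by simp
      qed (use lc Q m mQ in auto)
      finally show "(lam Q \<otimes> w (iQ Q)) \<otimes> f m i = finsum B (\<lambda>Q'. (lam Q \<otimes> lam Q') \<otimes> (f m (iQ Q) \<otimes> f (mQ Q') i)) MM" .
    qed (use lc m mQ finMM in \<open>auto intro!: finsum_closed\<close>)
    also have "\<dots> = finsum B (\<lambda>Q. (lam Q \<otimes> f m (iQ Q)) \<otimes> w i) MM"
    proof (rule finsum_cong')
      fix Q assume Q: "Q \<in> MM"
      have "(lam Q \<otimes> f m (iQ Q)) \<otimes> w i = finsum B (\<lambda>Q'. (lam Q \<otimes> f m (iQ Q)) \<otimes> (lam Q' \<otimes> f (mQ Q') i)) MM"
        unfolding w_def using finMM lc mQ m Q by (intro finsum_rdistr) auto
      also have "\<dots> = finsum B (\<lambda>Q'. (lam Q \<otimes> lam Q') \<otimes> (f m (iQ Q) \<otimes> f (mQ Q') i)) MM"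
        using finMM lc mQ m Q by (intro finsum_cong') (auto simp: m_ac)
      finally show "finsum B (\<lambda>Q'. (lam Q \<otimes> lam Q') \<otimes> (f m (iQ Q) \<otimes> f (mQ Q') i)) MM = (lam Q \<otimes> f m (iQ Q)) \<otimes> w i"
        by simp
    qed (use lc m wc in auto)
    also have "\<dots> = psi (f m) \<otimes> w i"
      unfolding psi_def using finMM lc wc m by (intro finsum_ldistr[symmetric]) auto
    finally show ?thesis .
  qed
  define phi where "phi m = inv u \<otimes> psi (f m)" for m
  have iuc: "inv u \<in> carrier B" using uU by simp
  have phic: "\<And>m. m \<in> carrier M \<Longrightarrow> phi m \<in> carrier B" unfolding phi_def using iuc psic by simp
  have K': "phi m \<otimes> w i = f m i" if m: "m \<in> carrier M" for m i
  proof -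
    have "phi m \<otimes> w i = inv u \<otimes> (psi (f m) \<otimes> w i)" unfolding phi_def using iuc psic wc m by (simp add: m_assoc)
    also have "\<dots> = inv u \<otimes> (u \<otimes> f m i)" using K m by simp
    also have "\<dots> = f m i" using uU uc m by (simp add: m_assoc[symmetric])
    finally show ?thesis .
  qed
  have phi_add: "phi (m \<oplus>\<^bsub>M\<^esub> m') = phi m \<oplus> phi m'" if m: "m \<in> carrier M" "m' \<in> carrier M" for m m'
  proof -
    have "psi (f (m \<oplus>\<^bsub>M\<^esub> m')) = finsum B (\<lambda>Q. lam Q \<otimes> f m (iQ Q) \<oplus> lam Q \<otimes> f m' (iQ Q)) MM"
      unfolding psi_def using fadd[OF m] lc m by (intro finsum_cong') (auto simp: r_distr)
    also have "\<dots> = psi (f m) \<oplus> psi (f m')" unfolding psi_def using lc m by (intro finsum_addf) auto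
    finally show ?thesis unfolding phi_def using iuc psic m by (simp add: r_distr)
  qed
  have phi_sm: "phi (a \<odot>\<^bsub>M\<^esub> m) = a \<otimes> phi m" if a: "a \<in> A" and m: "m \<in> carrier M" for a m
  proof -
    have "psi (f (a \<odot>\<^bsub>M\<^esub> m)) = finsum B (\<lambda>Q. a \<otimes> (lam Q \<otimes> f m (iQ Q))) MM"
      unfolding psi_def using fsm[OF a m] lc m a by (intro finsum_cong') (auto simp: m_lcomm)
    also have "\<dots> = a \<otimes> psi (f m)" unfolding psi_def using lc m a by (intro finsum_rdistr[symmetric]) auto
    finally show ?thesis unfolding phi_def using iuc psic m a by (simp add: m_lcomm)
  qed
  have phi0: "phi \<zero>\<^bsub>M\<^esub> = \<zero>"
  proof -
    have "psi (f \<zero>\<^bsub>M\<^esub>) = finsum B (\<lambda>Q. \<zero>) MM"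
      unfolding psi_def using f0 lc by (intro finsum_cong') auto
    then show ?thesis unfolding phi_def using iuc by simp
  qed
  have phi_neg: "phi (\<ominus>\<^bsub>M\<^esub> m) = \<ominus> phi m" if m: "m \<in> carrier M" for m
  proof -
    have "phi (\<ominus>\<^bsub>M\<^esub> m) \<oplus> phi m = phi (\<ominus>\<^bsub>M\<^esub> m \<oplus>\<^bsub>M\<^esub> m)" using phi_add m by simp
    also have "\<dots> = \<zero>" using phi0 m by (simp add: Mm.M.l_neg)
    finally show ?thesis using minus_equality phic m by simp
  qed
  define L where "L = phi ` carrier M"
  define L' where "L' = {x \<in> carrier B. \<forall>m\<in>carrier M. phi m \<otimes> x \<in> A}"
  have subL: "is_A_submodule B A L" unfolding is_A_submodule_def L_def
  proof (intro conjI ballI)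
    show "phi ` carrier M \<subseteq> carrier B" using phic by auto
    show "\<zero> \<in> phi ` carrier M" using phi0 by (metis Mm.M.zero_closed image_eqI)
    fix x y assume "x \<in> phi ` carrier M" "y \<in> phi ` carrier M"
    then obtain m m' where "m \<in> carrier M" "m' \<in> carrier M" "x = phi m" "y = phi m'" by blast
    then show "x \<oplus> y \<in> phi ` carrier M" using phi_add by (metis Mm.M.add.m_closed image_eqI)
  next
    fix x assume "x \<in> phi ` carrier M"
    then obtain m where "m \<in> carrier M" "x = phi m" by blast
    then show "\<ominus> x \<in> phi ` carrier M" using phi_neg by (metis Mm.M.add.inv_closed image_eqI)
  next
    fix a x assume "a \<in> A" "x \<in> phi ` carrier M"
    then obtain m where "a \<in> A" "m \<in> carrier M" "x = phi m" by blast
    then show "a \<otimes> x \<in> phi ` carrier M" using phi_sm by (metis Mm.smult_closed sr_simps(1) image_eqI)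
  qed
  have L'I: "x \<in> L'" if "x \<in> carrier B" "\<And>m. m \<in> carrier M \<Longrightarrow> phi m \<otimes> x \<in> A" for x
    using that unfolding L'_def by blast
  have L'D: "x \<in> carrier B" "phi m \<otimes> x \<in> A" if "x \<in> L'" "m \<in> carrier M" for x m
    using that unfolding L'_def by blast+
  have L'c: "x \<in> carrier B" if "x \<in> L'" for x using that unfolding L'_def by blast
  have subL': "is_A_submodule B A L'" unfolding is_A_submodule_def
  proof (intro conjI ballI)
    show "L' \<subseteq> carrier B" using L'c by blast
    show "\<zero> \<in> L'" by (rule L'I) (use phic in simp_all)
    fix x y assume xy: "x \<in> L'" "y \<in> L'"
    show "x \<oplus> y \<in> L'"
    proof (rule L'I)
      show "x \<oplus> y \<in> carrier B" using xy L'c by simp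
      fix m assume m: "m \<in> carrier M"
      have "phi m \<otimes> (x \<oplus> y) = phi m \<otimes> x \<oplus> phi m \<otimes> y" using xy L'c phic m by (simp add: r_distr)
      then show "phi m \<otimes> (x \<oplus> y) \<in> A" using L'D xy m by simp
    qed
  next
    fix x assume x: "x \<in> L'"
    show "\<ominus> x \<in> L'"
    proof (rule L'I)
      show "\<ominus> x \<in> carrier B" using x L'c by simp
      fix m assume m: "m \<in> carrier M"
      have "phi m \<otimes> (\<ominus> x) = \<ominus> (phi m \<otimes> x)" using x L'c phic m by (simp add: r_minus)
      then show "phi m \<otimes> (\<ominus> x) \<in> A" using L'D x m by simp
    qed
  next
    fix a x assume a: "a \<in> A" and x: "x \<in> L'"
    show "a \<otimes> x \<in> L'"
    proof (rule L'I)
      show "a \<otimes> x \<in> carrier B" using a x L'c by simp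
      fix m assume m: "m \<in> carrier M"
      have "phi m \<otimes> (a \<otimes> x) = a \<otimes> (phi m \<otimes> x)" using a x L'c phic m by (simp add: m_lcomm)
      then show "phi m \<otimes> (a \<otimes> x) \<in> A" using L'D x m a by simp
    qed
  qed
  have wL': "\<And>k. k < n \<Longrightarrow> w k \<in> L'" unfolding L'_def using wc K' fA by simp
  have wstar: "finsum B (\<lambda>k. f (g (ev k)) i \<otimes> w k) {..<n} = w i" for i
  proof -
    have "finsum B (\<lambda>k. f (g (ev k)) i \<otimes> w k) {..<n} =
          finsum B (\<lambda>k. finsum B (\<lambda>Q. f (g (ev k)) i \<otimes> (lam Q \<otimes> f (mQ Q) k)) MM) {..<n}"
      unfolding w_def using gev lc mQ finMM by (intro finsum_cong' finsum_rdistr) (auto intro!: finsum_closed)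
    also have "\<dots> = finsum B (\<lambda>Q. finsum B (\<lambda>k. f (g (ev k)) i \<otimes> (lam Q \<otimes> f (mQ Q) k)) {..<n}) MM"
      using gev lc mQ finMM by (intro finsum_swap) auto
    also have "\<dots> = finsum B (\<lambda>Q. lam Q \<otimes> finsum B (\<lambda>k. f (mQ Q) k \<otimes> f (g (ev k)) i) {..<n}) MM"
    proof (rule finsum_cong')
      fix Q assume Q: "Q \<in> MM"
      have "lam Q \<otimes> finsum B (\<lambda>k. f (mQ Q) k \<otimes> f (g (ev k)) i) {..<n} =
            finsum B (\<lambda>k. lam Q \<otimes> (f (mQ Q) k \<otimes> f (g (ev k)) i)) {..<n}"
        using gev lc mQ Q by (intro finsum_rdistr) auto
      also have "\<dots> = finsum B (\<lambda>k. f (g (ev k)) i \<otimes> (lam Q \<otimes> f (mQ Q) k)) {..<n}"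
        using gev lc mQ Q by (intro finsum_cong') (auto simp: m_ac)
      finally show "finsum B (\<lambda>k. f (g (ev k)) i \<otimes> (lam Q \<otimes> f (mQ Q) k)) {..<n} =
            lam Q \<otimes> finsum B (\<lambda>k. f (mQ Q) k \<otimes> f (g (ev k)) i) {..<n}" by simp
    qed (use lc mQ gev in \<open>auto intro!: finsum_closed\<close>)
    also have "\<dots> = w i" unfolding w_def using lemG mQ by (intro finsum_cong') (auto intro: lc)
    finally show ?thesis .
  qed
  define x where "x = finsum B (\<lambda>k. phi (g (ev k)) \<otimes> w k) {..<n}"
  have xc: "x \<in> carrier B" unfolding x_def using phic gev wc by (intro finsum_closed) auto
  have xw: "x \<otimes> w i = w i" for i
  proof -
    have "x \<otimes> w i = finsum B (\<lambda>k. (phi (g (ev k)) \<otimes> w k) \<otimes> w i) {..<n}"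
      unfolding x_def using phic gev wc by (intro finsum_ldistr) auto
    also have "\<dots> = finsum B (\<lambda>k. f (g (ev k)) i \<otimes> w k) {..<n}"
    proof (rule finsum_cong')
      fix k assume "k \<in> {..<n}"
      then have k: "k < n" by simp
      have "(phi (g (ev k)) \<otimes> w k) \<otimes> w i = (phi (g (ev k)) \<otimes> w i) \<otimes> w k"
        using phic gev k wc by (simp add: m_ac)
      also have "\<dots> = f (g (ev k)) i \<otimes> w k" using K' gev k by simp
      finally show "(phi (g (ev k)) \<otimes> w k) \<otimes> w i = f (g (ev k)) i \<otimes> w k" .
    qed (use gev wc in auto)
    also have "\<dots> = w i" by (rule wstar)
    finally show ?thesis .
  qed
  have xu: "x \<otimes> u = u"
  proof -
    have "x \<otimes> u = finsum B (\<lambda>Q. x \<otimes> (lam Q \<otimes> w (iQ Q))) MM"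
      unfolding u_def psi_def using xc lc wc by (intro finsum_rdistr) auto
    also have "\<dots> = finsum B (\<lambda>Q. lam Q \<otimes> w (iQ Q)) MM"
    proof (rule finsum_cong')
      fix Q assume Q: "Q \<in> MM"
      have "x \<otimes> (lam Q \<otimes> w (iQ Q)) = lam Q \<otimes> (x \<otimes> w (iQ Q))" using xc lc[OF Q] wc by (simp add: m_lcomm)
      then show "x \<otimes> (lam Q \<otimes> w (iQ Q)) = lam Q \<otimes> w (iQ Q)" using xw by simp
    qed (use lc wc in auto)
    finally show ?thesis unfolding u_def psi_def .
  qed
  have x1: "x = \<one>"
  proof -
    have "x = x \<otimes> (u \<otimes> inv u)" using xc uU by simp
    also have "\<dots> = (x \<otimes> u) \<otimes> inv u" using xc uc iuc by (simp add: m_assoc)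
    also have "\<dots> = \<one>" using xu uU by simp
    finally show ?thesis .
  qed
  have prodA: "prod_submod B L L' = A"
  proof
    show "prod_submod B L L' \<subseteq> A"
    proof
      fix z assume "z \<in> prod_submod B L L'"
      then show "z \<in> A"
      proof (induct rule: prod_submod.induct)
        case (prod x y) then show ?case unfolding L_def L'_def by auto
      qed simp_all
    qed
    show "A \<subseteq> prod_submod B L L'"
    proof
      fix a assume a: "a \<in> A"
      have "a = a \<otimes> x" using x1 a by simp
      also have "\<dots> = finsum B (\<lambda>k. (a \<otimes> phi (g (ev k))) \<otimes> w k) {..<n}"
        unfolding x_def using a phic gev wc by (subst finsum_rdistr) (auto simp: m_assoc intro!: finsum_cong')
      also have "\<dots> = finsum B (\<lambda>k. phi (a \<odot>\<^bsub>M\<^esub> g (ev k)) \<otimes> w k) {..<n}"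
        using a phi_sm gev wc by (intro finsum_cong') (auto intro!: m_closed phic)
      also have "\<dots> \<in> prod_submod B L L'"
      proof (rule finsum_in_set)
        show "prod_submod B L L' \<subseteq> carrier B" using prod_sub subm_props(1)[OF subL] subm_props(1)[OF subL'] by blast
        show "\<zero> \<in> prod_submod B L L'" by (rule prod_submod.zero)
        show "\<And>x y. x \<in> prod_submod B L L' \<Longrightarrow> y \<in> prod_submod B L L' \<Longrightarrow> x \<oplus> y \<in> prod_submod B L L'"
          by (rule prod_submod.add)
        fix k assume "k \<in> {..<n}"
        then have k: "k < n" by simp
        have "phi (a \<odot>\<^bsub>M\<^esub> g (ev k)) \<in> L" unfolding L_def using a gev[OF k] by simp
        then show "phi (a \<odot>\<^bsub>M\<^esub> g (ev k)) \<otimes> w k \<in> prod_submod B L L'"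
          using wL'[OF k] by (rule prod_submod.prod)
      qed simp
      finally show "a \<in> prod_submod B L L'" .
    qed
  qed
  have inv: "invertible_ideal B A L" unfolding invertible_ideal_def using subL subL' prodA by blast
  define chi where "chi l = g (\<lambda>i. if i < n then l \<otimes> w i else \<zero>)" for l
  have chi_phi: "chi (phi m) = m" if m: "m \<in> carrier M" for m
  proof -
    have "(\<lambda>i. if i < n then phi m \<otimes> w i else \<zero>) = f m"
      by (rule ext) (use K' fz m in auto)
    then show ?thesis unfolding chi_def using gf m by simp
  qed
  have lin: "lin_map (subring_ring B A) (submod_as_module B L) M chi"
  proof (rule lin_mapI)
    show "chi \<in> carrier (submod_as_module B L) \<rightarrow> carrier M" unfolding L_def using chi_phi by auto
    fix l l' assume "l \<in> carrier (submod_as_module B L)" "l' \<in> carrier (submod_as_module B L)"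
    then obtain m m' where m: "m \<in> carrier M" "m' \<in> carrier M" "l = phi m" "l' = phi m'" unfolding L_def by auto
    show "chi (l \<oplus>\<^bsub>submod_as_module B L\<^esub> l') = chi l \<oplus>\<^bsub>M\<^esub> chi l'"
      using m chi_phi[of "m \<oplus>\<^bsub>M\<^esub> m'"] chi_phi[of m] chi_phi[of m'] phi_add[OF m(1,2)] Mm.M.add.m_closed[OF m(1,2)] by simp
  next
    fix a l assume "a \<in> carrier (subring_ring B A)" "l \<in> carrier (submod_as_module B L)"
    then obtain m where m: "a \<in> A" "m \<in> carrier M" "l = phi m" unfolding L_def by auto
    show "chi (a \<odot>\<^bsub>submod_as_module B L\<^esub> l) = a \<odot>\<^bsub>M\<^esub> chi l"
      using m chi_phi[of "a \<odot>\<^bsub>M\<^esub> m"] chi_phi[of m] phi_sm[OF m(1,2)] Mm.smult_closed[of a m] by simp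
  qed
  have bij: "bij_betw chi L (carrier M)"
  proof (rule bij_betwI')
    fix l l' assume "l \<in> L" "l' \<in> L"
    then obtain m m' where mm: "m \<in> carrier M" "m' \<in> carrier M" "l = phi m" "l' = phi m'" unfolding L_def by auto
    have c: "chi l = m" "chi l' = m'" using mm chi_phi by simp_all
    show "(chi l = chi l') = (l = l')"
    proof
      assume "chi l = chi l'" then have "m = m'" using c by simp
      then show "l = l'" using mm by simp
    qed simp
  next
    fix l assume "l \<in> L"
    then show "chi l \<in> carrier M" unfolding L_def using chi_phi by auto
  next
    fix m assume "m \<in> carrier M"
    then show "\<exists>l\<in>L. m = chi l" unfolding L_def using chi_phi by (intro bexI[of _ "phi m"]) auto
  qed
  have "mod_iso (subring_ring B A) (submod_as_module B L) M"
    unfolding mod_iso_def using lin bij by auto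
  then show ?thesis using inv by blast
qed

end

theorem corollary4p6:
  fixes B :: "'b ring" and A :: "'b set"
  assumes "cring B" and "subring A B"
    and "finite {I. maximalideal I B}"
  shows
    \<comment> \<open>the map lands in Pic(A)\<close>
    "(\<forall>L. invertible_ideal B A L \<longrightarrow>
        fg_projective (subring_ring B A) (submod_as_module B L) \<and>
        const_rank_one (subring_ring B A) (submod_as_module B L))
     \<comment> \<open>well defined and injective on classes in C(A,B)\<close>
     \<and> (\<forall>L L'. invertible_ideal B A L \<and> invertible_ideal B A L' \<longrightarrow>
        (mod_iso (subring_ring B A) (submod_as_module B L) (submod_as_module B L') \<longleftrightarrow>
         (\<exists>x\<in>Units B. L' = prod_submod B L (principal_submod B A x))))
     \<comment> \<open>surjective\<close>
     \<and> (\<forall>M :: ('b, 'm) module. module (subring_ring B A) M \<and>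
          fg_projective (subring_ring B A) M \<and> const_rank_one (subring_ring B A) M \<longrightarrow>
        (\<exists>L. invertible_ideal B A L \<and> mod_iso (subring_ring B A) (submod_as_module B L) M))
     \<comment> \<open>homomorphism: LL' together with multiplication is a tensor product of L and L'\<close>
     \<and> (\<forall>L L'. invertible_ideal B A L \<and> invertible_ideal B A L' \<longrightarrow>
        bilin_map (subring_ring B A) (submod_as_module B L) (submod_as_module B L')
          (submod_as_module B (prod_submod B L L')) (\<lambda>x y. x \<otimes>\<^bsub>B\<^esub> y) \<and>
        (\<forall>(N :: ('b, 'n) module) \<beta>. module (subring_ring B A) N \<and>
           bilin_map (subring_ring B A) (submod_as_module B L) (submod_as_module B L') N \<beta> \<longrightarrow>
           (\<exists>!h. lin_map (subring_ring B A) (submod_as_module B (prod_submod B L L')) N h \<and>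
                 (\<forall>x\<in>prod_submod B L L'. h x \<in> carrier N) \<and>
                 h \<in> extensional (prod_submod B L L') \<and>
                 (\<forall>x\<in>L. \<forall>y\<in>L'. h (x \<otimes>\<^bsub>B\<^esub> y) = \<beta> x y))))"
proof -
  have E: "ext_set B A" by (rule ext_set.intro[OF assms(1)]) (rule ext_set_axioms.intro[OF assms(2)])
  have c1: "\<forall>L. invertible_ideal B A L \<longrightarrow>
        fg_projective (subring_ring B A) (submod_as_module B L) \<and>
        const_rank_one (subring_ring B A) (submod_as_module B L)"
    using ext_set.inv_fgp[OF E] ext_set.inv_rank[OF E] by blast
  have c2: "\<forall>L L'. invertible_ideal B A L \<and> invertible_ideal B A L' \<longrightarrow>
        (mod_iso (subring_ring B A) (submod_as_module B L) (submod_as_module B L') \<longleftrightarrow>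
         (\<exists>x\<in>Units B. L' = prod_submod B L (principal_submod B A x)))"
    using ext_set.iso_iff[OF E] by blast
  have c3: "\<forall>M :: ('b, 'm) module. module (subring_ring B A) M \<and>
          fg_projective (subring_ring B A) M \<and> const_rank_one (subring_ring B A) M \<longrightarrow>
        (\<exists>L. invertible_ideal B A L \<and> mod_iso (subring_ring B A) (submod_as_module B L) M)"
  proof (intro allI impI, elim conjE)
    fix M :: "('b, 'm) module"
    assume M: "module (subring_ring B A) M" and fp: "fg_projective (subring_ring B A) M"
      and rk: "const_rank_one (subring_ring B A) M"
    obtain n f g where nfg: "lin_map (subring_ring B A) M (free_module (subring_ring B A) n) f"
      "lin_map (subring_ring B A) (free_module (subring_ring B A) n) M g" "\<forall>m\<in>carrier M. g (f m) = m"
      using fp unfolding fg_projective_def by blast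
    have S: "surj_set B A M n f g"
      by (rule surj_set.intro[OF E]) (rule surj_set_axioms.intro[OF M nfg rk])
    show "\<exists>L. invertible_ideal B A L \<and> mod_iso (subring_ring B A) (submod_as_module B L) M"
      by (rule surj_set.surj_main[OF S assms(3)])
  qed
  have c4: "\<forall>L L'. invertible_ideal B A L \<and> invertible_ideal B A L' \<longrightarrow>
        bilin_map (subring_ring B A) (submod_as_module B L) (submod_as_module B L')
          (submod_as_module B (prod_submod B L L')) (\<lambda>x y. x \<otimes>\<^bsub>B\<^esub> y) \<and>
        (\<forall>(N :: ('b, 'n) module) \<beta>. module (subring_ring B A) N \<and>
           bilin_map (subring_ring B A) (submod_as_module B L) (submod_as_module B L') N \<beta> \<longrightarrow>
           (\<exists>!h. lin_map (subring_ring B A) (submod_as_module B (prod_submod B L L')) N h \<and>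
                 (\<forall>x\<in>prod_submod B L L'. h x \<in> carrier N) \<and>
                 h \<in> extensional (prod_submod B L L') \<and>
                 (\<forall>x\<in>L. \<forall>y\<in>L'. h (x \<otimes>\<^bsub>B\<^esub> y) = \<beta> x y)))"
  proof (intro allI impI, elim conjE)
    fix L L' assume "invertible_ideal B A L" "invertible_ideal B A L'"
    then show "bilin_map (subring_ring B A) (submod_as_module B L) (submod_as_module B L')
          (submod_as_module B (prod_submod B L L')) (\<lambda>x y. x \<otimes>\<^bsub>B\<^esub> y) \<and>
        (\<forall>(N :: ('b, 'n) module) \<beta>. module (subring_ring B A) N \<and>
           bilin_map (subring_ring B A) (submod_as_module B L) (submod_as_module B L') N \<beta> \<longrightarrow>
           (\<exists>!h. lin_map (subring_ring B A) (submod_as_module B (prod_submod B L L')) N h \<and>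
                 (\<forall>x\<in>prod_submod B L L'. h x \<in> carrier N) \<and>
                 h \<in> extensional (prod_submod B L L') \<and>
                 (\<forall>x\<in>L. \<forall>y\<in>L'. h (x \<otimes>\<^bsub>B\<^esub> y) = \<beta> x y)))"
      by (rule ext_set.tensor[OF E])
  qed
  show ?thesis by (rule conjI[OF c1 conjI[OF c2 conjI[OF c3 c4]]])
qed

end
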